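(* Let $\Phi$ be a uniformly absolutely convergent interaction on $X=E^{\mathbb{Z}}$ ($E$ finite) satisfying the Dobrushin condition $\bar c(\Phi)<1$, and let $f^{(k)}=\frac{d\nu^{(k)}}{d\nu^{(0)}}$, $k\in\mathbb{N}$. Suppose the family $\{f^{(k)}\}_{k\in\mathbb{N}}$ is uniformly integrable in $L^1(\nu^{(0)})$. Then any weak$^*$ limit point of the sequence $(\nu^{(k)})$ is a Gibbs measure for $\Phi$ and is absolutely continuous with respect to $\nu^{(0)}$.
   Context: An interaction $\Phi=(\Phi_\Lambda)_{\Lambda\Subset\mathbb{Z}}$ consists of functions $\Phi_\Lambda$ on $X$ depending only on coordinates in $\Lambda$; UAC means $\sup_i\sum_{V\ni i}\|\Phi_V\|_\infty<\infty$. Gibbs measures for $\Phi$ are probabilities consistent with $\gamma^\Phi_\Lambda(\omega_\Lambda|\eta_{\Lambda^c})=e^{-H^\Phi_\Lambda(\omega_\Lambda\eta_{\Lambda^c})}/\sum_{\bar\omega_\Lambda}e^{-H^\Phi_\Lambda(\bar\omega_\Lambda\eta_{\Lambda^c})}$, $H^\Phi_\Lambda=\sum_{V\cap\Lambda\ne\emptyset}\Phi_V$. Dobrushin condition: $\bar c(\Phi)=\frac12\sup_i\sum_{\Lambda\ni i}(|\Lambda|-1)\delta(\Phi_\Lambda)<1$, $\delta(f)=\sup_{\xi,\eta}|f(\xi)-f(\eta)|$. Let $\mathcal A=\{\Lambda\Subset\mathbb{Z}:\min\Lambda<0\le\max\Lambda\}=\{\Lambda_1,\Lambda_2,\dots\}$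 (fixed arbitrary enumeration) and, for $k\ge0$, $\Psi^{(k)}_\Lambda=0$ if $\Lambda\in\{\Lambda_i:i\ge k+1\}$, $\Psi^{(k)}_\Lambda=\Phi_\Lambda$ otherwise. Under the Dobrushin condition each $\Psi^{(k)}$ has a unique Gibbs measure $\nu^{(k)}$, and $\nu^{(k)}\ll\nu^{(0)}$. *)

theory Defs
  imports "HOL-Probability.Probability"
begin

text \<open>Configurations X = E^Z are functions int => 'e with 'e finite.
  An interaction is a map Phi :: int set => (int => 'e) => real; only its values on
  finite sets are ever used.\<close>

type_synonym 'e config = "int \<Rightarrow> 'e"
type_synonym 'e interaction = "int set \<Rightarrow> 'e config \<Rightarrow> real"

definition Xspace :: "('e::finite) config measure" where
  "Xspace = PiM UNIV (\<lambda>_::int. count_space (UNIV::'e set))"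

definition Xtop :: "('e::finite) config topology" where
  "Xtop = product_topology (\<lambda>_::int. discrete_topology (UNIV::'e set)) UNIV"

definition is_interaction :: "('e::finite) interaction \<Rightarrow> bool" where
  "is_interaction \<Phi> \<longleftrightarrow>
     (\<forall>V \<omega> \<omega>'. finite V \<longrightarrow> (\<forall>i\<in>V. \<omega> i = \<omega>' i) \<longrightarrow> \<Phi> V \<omega> = \<Phi> V \<omega>')"

definition supnorm :: "('e config \<Rightarrow> real) \<Rightarrow> real" where
  "supnorm f = Sup (range (\<lambda>\<omega>. \<bar>f \<omega>\<bar>))"

definition osc :: "('e config \<Rightarrow> real) \<Rightarrow> real" where
  "osc f = Sup {\<bar>f \<xi> - f \<eta>\<bar> | \<xi> \<eta>. True}"

definition UAC :: "('e::finite) interaction \<Rightarrow> bool" where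
  "UAC \<Phi> \<longleftrightarrow> (\<exists>C. \<forall>i::int.
      (\<lambda>V. supnorm (\<Phi> V)) summable_on {V. finite V \<and> i \<in> V} \<and>
      (\<Sum>\<^sub>\<infinity>V\<in>{V. finite V \<and> i \<in> V}. supnorm (\<Phi> V)) \<le> C)"

definition dobrushin :: "('e::finite) interaction \<Rightarrow> bool" where
  "dobrushin \<Phi> \<longleftrightarrow> (\<exists>c<1. \<forall>i::int.
      (\<lambda>\<Lambda>. (real (card \<Lambda>) - 1) * osc (\<Phi> \<Lambda>)) summable_on {\<Lambda>. finite \<Lambda> \<and> i \<in> \<Lambda>} \<and>
      (1/2) * (\<Sum>\<^sub>\<infinity>\<Lambda>\<in>{\<Lambda>. finite \<Lambda> \<and> i \<in> \<Lambda>}. (real (card \<Lambda>) - 1) * osc (\<Phi> \<Lambda>)) \<le> c)"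

definition hamiltonian :: "('e::finite) interaction \<Rightarrow> int set \<Rightarrow> 'e config \<Rightarrow> real" where
  "hamiltonian \<Phi> \<Lambda> \<sigma> = (\<Sum>\<^sub>\<infinity>V\<in>{V. finite V \<and> V \<inter> \<Lambda> \<noteq> {}}. \<Phi> V \<sigma>)"

definition agree_off :: "int set \<Rightarrow> ('e::finite) config \<Rightarrow> 'e config set" where
  "agree_off \<Lambda> \<eta> = {\<sigma>. \<forall>i. i \<notin> \<Lambda> \<longrightarrow> \<sigma> i = \<eta> i}"

definition gibbs_spec :: "('e::finite) interaction \<Rightarrow> int set \<Rightarrow> 'e config set \<Rightarrow> 'e config \<Rightarrow> real" where
  "gibbs_spec \<Phi> \<Lambda> A \<eta> =
     (\<Sum>\<sigma>\<in>agree_off \<Lambda> \<eta>. indicator A \<sigma> * exp (- hamiltonian \<Phi> \<Lambda> \<sigma>)) /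
     (\<Sum>\<sigma>\<in>agree_off \<Lambda> \<eta>. exp (- hamiltonian \<Phi> \<Lambda> \<sigma>))"

definition gibbs_measure :: "('e::finite) interaction \<Rightarrow> 'e config measure \<Rightarrow> bool" where
  "gibbs_measure \<Phi> \<mu> \<longleftrightarrow> sets \<mu> = sets Xspace \<and> prob_space \<mu> \<and>
     (\<forall>\<Lambda> A. finite \<Lambda> \<longrightarrow> A \<in> sets \<mu> \<longrightarrow>
        emeasure \<mu> A = (\<integral>\<^sup>+ \<eta>. ennreal (gibbs_spec \<Phi> \<Lambda> A \<eta>) \<partial>\<mu>))"

definition crossing_sets :: "int set set" where
  "crossing_sets = {\<Lambda>. finite \<Lambda> \<and> \<Lambda> \<noteq> {} \<and> Min \<Lambda> < 0 \<and> 0 \<le> Max \<Lambda>}"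

definition Psi :: "(nat \<Rightarrow> int set) \<Rightarrow> ('e::finite) interaction \<Rightarrow> nat \<Rightarrow> 'e interaction" where
  "Psi enum \<Phi> k \<Lambda> = (if \<Lambda> \<in> enum ` {i. k + 1 \<le> i} then (\<lambda>_. 0) else \<Phi> \<Lambda>)"

definition unif_integrable :: "'a measure \<Rightarrow> (nat \<Rightarrow> 'a \<Rightarrow> real) \<Rightarrow> bool" where
  "unif_integrable M f \<longleftrightarrow> (\<forall>k. integrable M (f k)) \<and>
     (\<forall>e>0. \<exists>K. \<forall>k. (\<integral>x. indicator {x. K < \<bar>f k x\<bar>} x * \<bar>f k x\<bar> \<partial>M) \<le> e)"

definition weak_star_conv :: "(nat \<Rightarrow> ('e::finite) config measure) \<Rightarrow> 'e config measure \<Rightarrow> bool" where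
  "weak_star_conv \<nu> \<mu> \<longleftrightarrow> (\<forall>g. continuous_map Xtop euclideanreal g \<longrightarrow>
      (\<lambda>j. \<integral>x. g x \<partial>\<nu> j) \<longlonglongrightarrow> (\<integral>x. g x \<partial>\<mu>))"

end

theory Submission
  imports Defs
begin



lemma space_X[simp]: "space (Xspace :: ('e::finite) config measure) = UNIV"
  by (simp add: Xspace_def space_PiM)
lemma topspace_X[simp]: "topspace (Xtop :: ('e::finite) config topology) = UNIV"
  by (simp add: Xtop_def)

definition loc :: "int set \<Rightarrow> (('e::finite) config \<Rightarrow> 'b) \<Rightarrow> bool" where
  "loc J f \<longleftrightarrow> finite J \<and> (\<forall>\<sigma> \<tau>. (\<forall>i\<in>J. \<sigma> i = \<tau> i) \<longrightarrow> f \<sigma> = f \<tau>)"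

definition loc_sets :: "('e::finite) config set set" where
  "loc_sets = {A. \<exists>J. loc J (\<lambda>\<sigma>. \<sigma> \<in> A)}"

lemma prod_ind: "finite J \<Longrightarrow> (\<Prod>i\<in>J. if P i then 1 else 0::real) = (if \<forall>i\<in>J. P i then 1 else 0)"
  by (induction J rule: finite_induct) auto

lemma loc_repr:
  fixes f :: "('e::finite) config \<Rightarrow> real"
  assumes "loc J f"
  shows "f \<sigma> = (\<Sum>a\<in>PiE J (\<lambda>_. UNIV). f a * (\<Prod>i\<in>J. if \<sigma> i = a i then 1 else 0))"
proof -
  have fin: "finite J" using assms by (simp add: loc_def)
  have "(\<Sum>a\<in>PiE J (\<lambda>_. UNIV). f a * (\<Prod>i\<in>J. if \<sigma> i = a i then 1 else 0))
      = (\<Sum>a\<in>PiE J (\<lambda>_. UNIV). if a = restrict \<sigma> J then f a else 0)"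
  proof (rule sum.cong[OF refl])
    fix a :: "'e config" assume a: "a \<in> PiE J (\<lambda>_. UNIV)"
    have "(\<forall>i\<in>J. \<sigma> i = a i) \<longleftrightarrow> a = restrict \<sigma> J"
      using a by (auto simp: PiE_def extensional_def restrict_def fun_eq_iff)
    then show "f a * (\<Prod>i\<in>J. if \<sigma> i = a i then 1 else 0) = (if a = restrict \<sigma> J then f a else 0)"
      by (simp add: prod_ind[OF fin])
  qed
  also have "\<dots> = f (restrict \<sigma> J)"
    by (simp add: sum.delta finite_PiE fin)
  also have "\<dots> = f \<sigma>" using assms by (auto simp: loc_def)
  finally show ?thesis by simp
qed

lemma loc_measurable:
  fixes f :: "('e::finite) config \<Rightarrow> real"
  assumes "loc J f"
  shows "f \<in> borel_measurable Xspace"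
proof -
  have fin: "finite J" using assms by (simp add: loc_def)
  have "(\<lambda>\<sigma>. \<Sum>a\<in>PiE J (\<lambda>_. UNIV). f a * (\<Prod>i\<in>J. if \<sigma> i = a i then 1 else 0)) \<in> borel_measurable Xspace"
  proof (intro borel_measurable_sum borel_measurable_times borel_measurable_prod borel_measurable_const)
    fix a :: "'e config" and i
    have "{\<sigma>::'e config. \<sigma> i = a i} \<in> sets Xspace"
    proof -
      have "(\<lambda>\<sigma>::'e config. \<sigma> i) \<in> measurable Xspace (count_space UNIV)"
        unfolding Xspace_def by (rule measurable_component_singleton) simp
      from measurable_sets[OF this, of "{a i}"] show ?thesis by (simp add: vimage_def)
    qed
    then have "indicator {\<sigma>::'e config. \<sigma> i = a i} \<in> borel_measurable Xspace" by simp
    moreover have "indicator {\<sigma>::'e config. \<sigma> i = a i} = (\<lambda>\<sigma>. if \<sigma> i = a i then 1 else 0::real)"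
      by (auto simp: indicator_def fun_eq_iff)
    ultimately show "(\<lambda>\<sigma>. if \<sigma> i = a i then 1 else 0::real) \<in> borel_measurable Xspace" by metis
  qed
  then show ?thesis by (subst loc_repr[OF assms, abs_def]) 
qed

lemma loc_continuous:
  fixes f :: "('e::finite) config \<Rightarrow> real"
  assumes "loc J f"
  shows "continuous_map Xtop euclideanreal f"
proof -
  have fin: "finite J" using assms by (simp add: loc_def)
  have c: "continuous_map Xtop euclideanreal (\<lambda>\<sigma>. if \<sigma> i = b then 1 else 0)" for i and b :: 'e
  proof -
    have "continuous_map Xtop (discrete_topology UNIV) (\<lambda>\<sigma>::'e config. \<sigma> i)"
      unfolding Xtop_def by (rule continuous_map_product_projection) simp
    moreover have "continuous_map (discrete_topology UNIV) euclideanreal (\<lambda>x::'e. if x = b then 1 else 0)"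
      by simp
    ultimately have "continuous_map Xtop euclideanreal ((\<lambda>x::'e. if x = b then 1 else 0) \<circ> (\<lambda>\<sigma>::'e config. \<sigma> i))"
      by (rule continuous_map_compose)
    then show ?thesis by (simp add: o_def)
  qed
  have "continuous_map Xtop euclideanreal (\<lambda>\<sigma>. \<Sum>a\<in>PiE J (\<lambda>_. UNIV). f a * (\<Prod>i\<in>J. if \<sigma> i = a i then 1 else 0))"
  proof (rule continuous_map_sum)
    show "finite (PiE J (\<lambda>_. UNIV::'e set))" by (simp add: fin finite_PiE)
    fix a :: "'e config"
    show "continuous_map Xtop euclideanreal (\<lambda>\<sigma>. f a * (\<Prod>i\<in>J. if \<sigma> i = a i then 1 else 0))"
      by (intro continuous_map_real_mult continuous_map_prod c fin continuous_map_canonical_const)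
  qed
  then show ?thesis by (subst loc_repr[OF assms, abs_def]) 
qed

lemma loc_sets_sets: "A \<in> loc_sets \<Longrightarrow> A \<in> sets (Xspace :: ('e::finite) config measure)"
proof -
  assume "A \<in> loc_sets"
  then obtain J where J: "loc J (\<lambda>\<sigma>::'e config. \<sigma> \<in> A)" by (auto simp: loc_sets_def)
  then have "loc J (indicator A :: 'e config \<Rightarrow> real)" by (auto simp: loc_def indicator_def)
  then have "(indicator A :: 'e config \<Rightarrow> real) \<in> borel_measurable (Xspace :: 'e config measure)" using loc_measurable by blast
  then show ?thesis by (simp add: borel_measurable_indicator_iff)
qed

lemma sets_X_gen: "sets (Xspace :: ('e::finite) config measure) = sigma_sets UNIV loc_sets"
proof -
  have "sets (Xspace :: 'e config measure) = sigma_sets UNIV {{f\<in>PiE UNIV (\<lambda>_. UNIV). f i \<in> A} | (i::int) (A::'e set). True}"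
    unfolding Xspace_def by (simp add: sets_PiM_single)
  also have "\<dots> = sigma_sets UNIV loc_sets"
  proof (rule sigma_sets_eqI)
    fix a assume "a \<in> {{f\<in>PiE UNIV (\<lambda>_. UNIV::'e set). f i \<in> A} | (i::int) A. True}"
    then obtain i A where "a = {f. f i \<in> A}" by auto
    then have "a \<in> loc_sets" unfolding loc_sets_def loc_def by (intro CollectI exI[of _ "{i}"]) auto
    then show "a \<in> sigma_sets UNIV loc_sets" by auto
  next
    fix b :: "'e config set" assume "b \<in> loc_sets"
    then have "b \<in> sets (Xspace :: 'e config measure)" by (rule loc_sets_sets)
    then show "b \<in> sigma_sets UNIV {{f\<in>PiE UNIV (\<lambda>_. UNIV). f i \<in> A} | (i::int) (A::'e set). True}"
      unfolding Xspace_def by (simp add: sets_PiM_single)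
  qed
  finally show ?thesis .
qed

lemma loc_sets_Int: "A \<in> loc_sets \<Longrightarrow> B \<in> loc_sets \<Longrightarrow> A \<inter> B \<in> loc_sets"
proof -
  assume "A \<in> loc_sets" "B \<in> loc_sets"
  then obtain J K where J: "loc J (\<lambda>\<sigma>. \<sigma> \<in> A)" and K: "loc K (\<lambda>\<sigma>. \<sigma> \<in> B)" by (auto simp: loc_sets_def)
  have "loc (J \<union> K) (\<lambda>\<sigma>. \<sigma> \<in> A \<inter> B)"
    unfolding loc_def
  proof (intro conjI allI impI)
    show "finite (J \<union> K)" using J K by (simp add: loc_def)
    fix \<sigma> \<tau> :: "'a config" assume "\<forall>i\<in>J \<union> K. \<sigma> i = \<tau> i"
    then have "(\<sigma> \<in> A) = (\<tau> \<in> A)" "(\<sigma> \<in> B) = (\<tau> \<in> B)"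
      using J K unfolding loc_def by blast+
    then show "(\<sigma> \<in> A \<inter> B) = (\<tau> \<in> A \<inter> B)" by blast
  qed
  then show ?thesis by (auto simp: loc_sets_def)
qed

lemma loc_sets_Un: "A \<in> loc_sets \<Longrightarrow> B \<in> loc_sets \<Longrightarrow> A \<union> B \<in> loc_sets"
proof -
  assume "A \<in> loc_sets" "B \<in> loc_sets"
  then obtain J K where J: "loc J (\<lambda>\<sigma>. \<sigma> \<in> A)" and K: "loc K (\<lambda>\<sigma>. \<sigma> \<in> B)" by (auto simp: loc_sets_def)
  have "loc (J \<union> K) (\<lambda>\<sigma>. \<sigma> \<in> A \<union> B)"
    unfolding loc_def
  proof (intro conjI allI impI)
    show "finite (J \<union> K)" using J K by (simp add: loc_def)
    fix \<sigma> \<tau> :: "'a config" assume "\<forall>i\<in>J \<union> K. \<sigma> i = \<tau> i"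
    then have "(\<sigma> \<in> A) = (\<tau> \<in> A)" "(\<sigma> \<in> B) = (\<tau> \<in> B)"
      using J K unfolding loc_def by blast+
    then show "(\<sigma> \<in> A \<union> B) = (\<tau> \<in> A \<union> B)" by blast
  qed
  then show ?thesis by (auto simp: loc_sets_def)
qed

lemma loc_sets_compl: "A \<in> loc_sets \<Longrightarrow> UNIV - A \<in> loc_sets"
proof -
  assume "A \<in> loc_sets"
  then obtain J where J: "loc J (\<lambda>\<sigma>. \<sigma> \<in> A)" by (auto simp: loc_sets_def)
  then have "loc J (\<lambda>\<sigma>. \<sigma> \<in> UNIV - A)" unfolding loc_def by blast
  then show ?thesis unfolding loc_sets_def by blast
qed

lemma loc_sets_empty: "{} \<in> loc_sets"
proof -
  have "loc {} (\<lambda>\<sigma>::'a config. \<sigma> \<in> {})" unfolding loc_def by simp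
  then show ?thesis unfolding loc_sets_def by blast
qed

lemma Int_stable_loc: "Int_stable loc_sets"
  unfolding Int_stable_def using loc_sets_Int by blast

lemma loc_sets_ind: "A \<in> loc_sets \<Longrightarrow> \<exists>J. loc J (indicator A :: ('e::finite) config \<Rightarrow> real)"
proof -
  assume "A \<in> loc_sets"
  then obtain J where J: "loc J (\<lambda>\<sigma>::'e config. \<sigma> \<in> A)" by (auto simp: loc_sets_def)
  then have "loc J (indicator A :: 'e config \<Rightarrow> real)" by (auto simp: loc_def indicator_def)
  then show ?thesis by blast
qed




definition Sset :: "int set \<Rightarrow> int set set" where
  "Sset \<Lambda> = {V. finite V \<and> V \<inter> \<Lambda> \<noteq> {}}"

lemma interaction_bound:
  fixes \<Phi> :: "('e::finite) interaction"
  assumes "is_interaction \<Phi>" "finite V"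
  shows "\<bar>\<Phi> V \<sigma>\<bar> \<le> supnorm (\<Phi> V)"
proof -
  have sub: "range (\<lambda>\<omega>. \<bar>\<Phi> V \<omega>\<bar>) \<subseteq> (\<lambda>a. \<bar>\<Phi> V a\<bar>) ` PiE V (\<lambda>_. UNIV)"
  proof
    fix x assume "x \<in> range (\<lambda>\<omega>. \<bar>\<Phi> V \<omega>\<bar>)"
    then obtain \<omega> where x: "x = \<bar>\<Phi> V \<omega>\<bar>" by auto
    have "\<Phi> V \<omega> = \<Phi> V (restrict \<omega> V)" using assms unfolding is_interaction_def by auto
    then show "x \<in> (\<lambda>a. \<bar>\<Phi> V a\<bar>) ` PiE V (\<lambda>_. UNIV)" using x
      by (intro image_eqI[of _ _ "restrict \<omega> V"]) auto
  qed
  have "finite (range (\<lambda>\<omega>. \<bar>\<Phi> V \<omega>\<bar>))" by (rule finite_subset[OF sub]) (simp add: finite_PiE assms)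
  then have "bdd_above (range (\<lambda>\<omega>. \<bar>\<Phi> V \<omega>\<bar>))" by (rule bdd_above_finite)
  then show ?thesis unfolding supnorm_def by (rule cSUP_upper[rotated]) simp
qed

lemma supnorm_nonneg:
  fixes \<Phi> :: "('e::finite) interaction"
  assumes "is_interaction \<Phi>" "finite V"
  shows "0 \<le> supnorm (\<Phi> V)"
  using interaction_bound[OF assms] abs_ge_zero order_trans by blast

lemma UAC_summable:
  fixes \<Phi> :: "('e::finite) interaction"
  assumes "UAC \<Phi>" "finite \<Lambda>"
  shows "(\<lambda>V. supnorm (\<Phi> V)) summable_on Sset \<Lambda>"
proof -
  obtain C where C: "\<And>i. (\<lambda>V. supnorm (\<Phi> V)) summable_on {V. finite V \<and> i \<in> V}"
    using assms(1) unfolding UAC_def by blast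
  have eq: "Sset \<Lambda> = (\<Union>i\<in>\<Lambda>. {V. finite V \<and> i \<in> V})" by (auto simp: Sset_def)
  have "(\<lambda>V. supnorm (\<Phi> V)) summable_on (\<Union>i\<in>\<Lambda>. {V. finite V \<and> i \<in> V})"
    using assms(2)
  proof (induction \<Lambda> rule: finite_induct)
    case empty then show ?case by simp
  next
    case (insert x F)
    have "(\<Union>i\<in>insert x F. {V. finite V \<and> i \<in> V}) = {V. finite V \<and> x \<in> V} \<union> (\<Union>i\<in>F. {V. finite V \<and> i \<in> V})"
      by auto
    then show ?case using summable_on_union[OF C insert.IH] by simp
  qed
  then show ?thesis using eq by simp
qed

lemma ham_summable:
  fixes \<Phi> :: "('e::finite) interaction"
  assumes "is_interaction \<Phi>" "UAC \<Phi>" "finite \<Lambda>" "T \<subseteq> Sset \<Lambda>"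
  shows "(\<lambda>V. norm (\<Phi> V \<sigma>)) summable_on T" "(\<lambda>V. \<Phi> V \<sigma>) summable_on T"
    "(\<lambda>V. supnorm (\<Phi> V)) summable_on T"
proof -
  show s: "(\<lambda>V. supnorm (\<Phi> V)) summable_on T"
    using summable_on_subset_banach[OF UAC_summable[OF assms(2,3)] assms(4)] .
  show a: "(\<lambda>V. norm (\<Phi> V \<sigma>)) summable_on T"
  proof (rule summable_on_comparison_test[OF s])
    fix V assume "V \<in> T"
    then have "finite V" using assms(4) by (auto simp: Sset_def)
    then show "norm (\<Phi> V \<sigma>) \<le> supnorm (\<Phi> V)" using interaction_bound[OF assms(1)] by simp
  qed simp
  show "(\<lambda>V. \<Phi> V \<sigma>) summable_on T" using abs_summable_summable[OF a] .
qed

lemma ham_diff: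
  fixes \<Phi> \<psi> :: "('e::finite) interaction"
  assumes "is_interaction \<Phi>" "UAC \<Phi>" "finite \<Lambda>"
    and psi: "\<And>V \<sigma>. V \<in> Sset \<Lambda> \<Longrightarrow> \<psi> V \<sigma> = (if V \<in> T then 0 else \<Phi> V \<sigma>)"
  shows "\<bar>hamiltonian \<Phi> \<Lambda> \<sigma> - hamiltonian \<psi> \<Lambda> \<sigma>\<bar> \<le> infsum (\<lambda>V. supnorm (\<Phi> V)) (Sset \<Lambda> \<inter> T)"
proof -
  let ?S = "Sset \<Lambda>"
  have hS: "hamiltonian \<Phi> \<Lambda> \<sigma> = infsum (\<lambda>V. \<Phi> V \<sigma>) ?S" by (simp add: hamiltonian_def Sset_def)
  have hpsi: "hamiltonian \<psi> \<Lambda> \<sigma> = infsum (\<lambda>V. \<Phi> V \<sigma>) (?S - T)"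
    unfolding hamiltonian_def Sset_def[symmetric] by (rule infsum_cong_neutral) (auto simp: psi)
  have split: "infsum (\<lambda>V. \<Phi> V \<sigma>) ?S = infsum (\<lambda>V. \<Phi> V \<sigma>) (?S \<inter> T) + infsum (\<lambda>V. \<Phi> V \<sigma>) (?S - T)"
  proof -
    have "?S = (?S \<inter> T) \<union> (?S - T)" by blast
    then have "infsum (\<lambda>V. \<Phi> V \<sigma>) ?S = infsum (\<lambda>V. \<Phi> V \<sigma>) ((?S \<inter> T) \<union> (?S - T))" by simp
    also have "\<dots> = infsum (\<lambda>V. \<Phi> V \<sigma>) (?S \<inter> T) + infsum (\<lambda>V. \<Phi> V \<sigma>) (?S - T)"
      by (rule infsum_Un_disjoint) (auto intro: ham_summable[OF assms(1-3)])
    finally show ?thesis .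
  qed
  have "\<bar>hamiltonian \<Phi> \<Lambda> \<sigma> - hamiltonian \<psi> \<Lambda> \<sigma>\<bar> = norm (infsum (\<lambda>V. \<Phi> V \<sigma>) (?S \<inter> T))"
    using hS hpsi split by simp
  also have "\<dots> \<le> infsum (\<lambda>V. norm (\<Phi> V \<sigma>)) (?S \<inter> T)"
    by (rule norm_infsum_bound) (rule ham_summable[OF assms(1-3)], blast)
  also have "\<dots> \<le> infsum (\<lambda>V. supnorm (\<Phi> V)) (?S \<inter> T)"
  proof (rule infsum_mono)
    show "(\<lambda>V. norm (\<Phi> V \<sigma>)) summable_on ?S \<inter> T"
      using ham_summable(1)[OF assms(1-3), of "?S \<inter> T"] by blast
    show "(\<lambda>V. supnorm (\<Phi> V)) summable_on ?S \<inter> T"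
      using ham_summable(3)[OF assms(1-3), of "?S \<inter> T"] by blast
    fix V assume "V \<in> ?S \<inter> T"
    then have "finite V" by (auto simp: Sset_def)
    then show "norm (\<Phi> V \<sigma>) \<le> supnorm (\<Phi> V)" using interaction_bound[OF assms(1)] by simp
  qed
  finally show ?thesis .
qed

lemma tail_small:
  fixes w :: "'a \<Rightarrow> real"
  assumes "w summable_on S" "\<And>x. x\<in>S \<Longrightarrow> 0 \<le> w x" "\<epsilon> > 0"
  shows "\<exists>F. finite F \<and> F \<subseteq> S \<and> (\<forall>T. T \<subseteq> S - F \<longrightarrow> infsum w T \<le> \<epsilon>)"
proof -
  have "((\<lambda>F. sum w F) \<longlongrightarrow> infsum w S) (finite_subsets_at_top S)" by (rule infsum_tendsto[OF assms(1)])
  then have "\<forall>\<^sub>F F in finite_subsets_at_top S. dist (sum w F) (infsum w S) < \<epsilon>"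
    using tendstoD assms(3) by blast
  then obtain F where F: "finite F" "F \<subseteq> S" and dF: "dist (sum w F) (infsum w S) < \<epsilon>"
    unfolding eventually_finite_subsets_at_top by blast
  have sSF: "w summable_on (S - F)" using summable_on_subset_banach[OF assms(1)] by blast
  have "infsum w S = infsum w (F \<union> (S - F))" using F by (simp add: Un_absorb1)
  also have "\<dots> = infsum w F + infsum w (S - F)"
    by (rule infsum_Un_disjoint) (use F sSF in auto)
  finally have "infsum w (S - F) = infsum w S - sum w F" using F by simp
  then have lt: "infsum w (S - F) \<le> \<epsilon>" using dF by (simp add: dist_real_def)
  show ?thesis
  proof (intro exI conjI allI impI)
    fix T assume T: "T \<subseteq> S - F"
    have "infsum w T \<le> infsum w (S - F)"
      by (rule infsum_mono2) (use T sSF summable_on_subset_banach[OF sSF T] assms(2) in auto)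
    then show "infsum w T \<le> \<epsilon>" using lt by simp
  qed (use F in auto)
qed

definition trunc :: "int set set \<Rightarrow> ('e::finite) interaction \<Rightarrow> 'e interaction" where
  "trunc F \<Phi> V = (if V \<in> F then \<Phi> V else (\<lambda>_. 0))"

lemma ham_approx:
  fixes \<Phi> :: "('e::finite) interaction"
  assumes "is_interaction \<Phi>" "UAC \<Phi>" "finite \<Lambda>" "\<epsilon> > 0"
  shows "\<exists>h J. loc J h \<and> (\<forall>\<sigma>. \<bar>hamiltonian \<Phi> \<Lambda> \<sigma> - h \<sigma>\<bar> \<le> \<epsilon>)"
proof -
  obtain F where F: "finite F" "F \<subseteq> Sset \<Lambda>"
    and tl: "\<And>T. T \<subseteq> Sset \<Lambda> - F \<Longrightarrow> infsum (\<lambda>V. supnorm (\<Phi> V)) T \<le> \<epsilon>"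
    using tail_small[OF UAC_summable[OF assms(2,3)] _ assms(4)] supnorm_nonneg[OF assms(1)]
    unfolding Sset_def by blast
  let ?h = "hamiltonian (trunc F \<Phi>) \<Lambda>"
  have bnd: "\<bar>hamiltonian \<Phi> \<Lambda> \<sigma> - ?h \<sigma>\<bar> \<le> \<epsilon>" for \<sigma>
  proof -
    have "\<bar>hamiltonian \<Phi> \<Lambda> \<sigma> - ?h \<sigma>\<bar> \<le> infsum (\<lambda>V. supnorm (\<Phi> V)) (Sset \<Lambda> \<inter> (- F))"
      by (rule ham_diff[OF assms(1-3)]) (simp add: trunc_def)
    also have "\<dots> \<le> \<epsilon>" by (rule tl) blast
    finally show ?thesis .
  qed
  have "loc (\<Union>F) ?h"
    unfolding loc_def
  proof (intro conjI allI impI)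
    show "finite (\<Union>F)" using F by (auto simp: Sset_def)
    fix \<sigma> \<tau> :: "'e config" assume ag: "\<forall>i\<in>\<Union>F. \<sigma> i = \<tau> i"
    show "?h \<sigma> = ?h \<tau>"
      unfolding hamiltonian_def
    proof (rule infsum_cong)
      fix V assume V: "V \<in> {V. finite V \<and> V \<inter> \<Lambda> \<noteq> {}}"
      show "trunc F \<Phi> V \<sigma> = trunc F \<Phi> V \<tau>"
      proof (cases "V \<in> F")
        case True
        then have "\<forall>i\<in>V. \<sigma> i = \<tau> i" using ag by blast
        then show ?thesis using True V assms(1) unfolding trunc_def is_interaction_def by auto
      qed (simp add: trunc_def)
    qed
  qed
  then show ?thesis using bnd by blast
qed

lemma unif_approx_measurable:
  fixes f :: "'a \<Rightarrow> real"
  assumes "\<And>n. h n \<in> borel_measurable M" "\<And>n x. \<bar>f x - h n x\<bar> \<le> 1 / Suc n"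
  shows "f \<in> borel_measurable M"
proof (rule borel_measurable_LIMSEQ_real[OF _ assms(1)])
  fix x
  show "(\<lambda>n. h n x) \<longlonglongrightarrow> f x"
  proof (rule LIMSEQ_I)
    fix r :: real assume "0 < r"
    then obtain n0 where n0: "inverse (real (Suc n0)) < r" using reals_Archimedean by blast
    show "\<exists>no. \<forall>n\<ge>no. norm (h n x - f x) < r"
    proof (intro exI allI impI)
      fix n assume "n0 \<le> n"
      then have a: "inverse (real (Suc n)) \<le> inverse (real (Suc n0))" by (simp add: le_imp_inverse_le)
      have b: "\<bar>f x - h n x\<bar> \<le> inverse (real (Suc n))" using assms(2)[of x n] by (simp add: divide_inverse)
      have "norm (h n x - f x) = \<bar>f x - h n x\<bar>" by (simp add: abs_minus_commute)
      then show "norm (h n x - f x) < r" using a b n0 by linarith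
    qed
  qed
qed

lemma ham_measurable:
  fixes \<Phi> :: "('e::finite) interaction"
  assumes "is_interaction \<Phi>" "UAC \<Phi>" "finite \<Lambda>"
  shows "hamiltonian \<Phi> \<Lambda> \<in> borel_measurable Xspace"
proof -
  have "\<forall>n. \<exists>h. (\<exists>J. loc J h) \<and> (\<forall>\<sigma>. \<bar>hamiltonian \<Phi> \<Lambda> \<sigma> - h \<sigma>\<bar> \<le> 1 / Suc n)"
    using ham_approx[OF assms] by simp
  then obtain h where h: "\<And>n. \<exists>J. loc J (h n)" "\<And>n \<sigma>. \<bar>hamiltonian \<Phi> \<Lambda> \<sigma> - h n \<sigma>\<bar> \<le> 1 / Suc n"
    by metis
  show ?thesis
  proof (rule unif_approx_measurable[of h])
    fix n show "h n \<in> borel_measurable Xspace" using h(1)[of n] loc_measurable by blast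
  qed (use h(2) in auto)
qed

lemma Psi_interaction:
  fixes \<Phi> :: "('e::finite) interaction"
  assumes "is_interaction \<Phi>"
  shows "is_interaction (Psi enum \<Phi> k)"
  using assms unfolding is_interaction_def Psi_def by auto

lemma supnorm_zero: "supnorm (\<lambda>_. 0) = 0"
  by (simp add: supnorm_def)

lemma Psi_UAC:
  fixes \<Phi> :: "('e::finite) interaction"
  assumes "is_interaction \<Phi>" "UAC \<Phi>"
  shows "UAC (Psi enum \<Phi> k)"
proof -
  obtain C where C: "\<And>i. (\<lambda>V. supnorm (\<Phi> V)) summable_on {V. finite V \<and> i \<in> V}"
    "\<And>i. (\<Sum>\<^sub>\<infinity>V\<in>{V. finite V \<and> i \<in> V}. supnorm (\<Phi> V)) \<le> C"
    using assms(2) unfolding UAC_def by blast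
  have le: "supnorm (Psi enum \<Phi> k V) \<le> supnorm (\<Phi> V)" and ge: "0 \<le> supnorm (Psi enum \<Phi> k V)"
    if "V \<in> {V. finite V \<and> i \<in> V}" for V i
    using that supnorm_nonneg[OF assms(1)] by (auto simp: Psi_def supnorm_zero)
  have s: "(\<lambda>V. supnorm (Psi enum \<Phi> k V)) summable_on {V. finite V \<and> i \<in> V}" for i
    by (rule summable_on_comparison_test[OF C(1)]) (use le ge in blast)+
  have "(\<Sum>\<^sub>\<infinity>V\<in>{V. finite V \<and> i \<in> V}. supnorm (Psi enum \<Phi> k V)) \<le> C" for i
  proof -
    have "(\<Sum>\<^sub>\<infinity>V\<in>{V. finite V \<and> i \<in> V}. supnorm (Psi enum \<Phi> k V))
        \<le> (\<Sum>\<^sub>\<infinity>V\<in>{V. finite V \<and> i \<in> V}. supnorm (\<Phi> V))"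
      by (rule infsum_mono[OF s C(1)]) (use le in blast)
    then show ?thesis using C(2)[of i] by simp
  qed
  then show ?thesis unfolding UAC_def using s by blast
qed

lemma Psi_ham_conv:
  fixes \<Phi> :: "('e::finite) interaction"
  assumes "is_interaction \<Phi>" "UAC \<Phi>" "finite \<Lambda>" "\<epsilon> > 0"
    and bij: "bij_betw enum {i. 1 \<le> i} crossing_sets"
  shows "\<exists>k0. \<forall>k\<ge>k0. \<forall>\<sigma>. \<bar>hamiltonian \<Phi> \<Lambda> \<sigma> - hamiltonian (Psi enum \<Phi> k) \<Lambda> \<sigma>\<bar> \<le> \<epsilon>"
proof -
  obtain F where F: "finite F" "F \<subseteq> Sset \<Lambda>"
    and tl: "\<And>T. T \<subseteq> Sset \<Lambda> - F \<Longrightarrow> infsum (\<lambda>V. supnorm (\<Phi> V)) T \<le> \<epsilon>"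
    using tail_small[OF UAC_summable[OF assms(2,3)] _ assms(4)] supnorm_nonneg[OF assms(1)]
    unfolding Sset_def by blast
  define I0 where "I0 = {i. 1 \<le> i \<and> enum i \<in> F}"
  have inj: "inj_on enum I0" using bij unfolding bij_betw_def I0_def by (auto intro: inj_on_subset)
  have "enum ` I0 \<subseteq> F" by (auto simp: I0_def)
  then have finI0: "finite I0" using finite_imageD[OF finite_subset[OF _ F(1)] inj] by blast
  define k0 where "k0 = Max (insert 0 I0)"
  have "\<forall>\<sigma>. \<bar>hamiltonian \<Phi> \<Lambda> \<sigma> - hamiltonian (Psi enum \<Phi> k) \<Lambda> \<sigma>\<bar> \<le> \<epsilon>" if "k \<ge> k0" for k
  proof
    fix \<sigma>
    let ?T = "enum ` {i. k + 1 \<le> i}"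
    have "\<bar>hamiltonian \<Phi> \<Lambda> \<sigma> - hamiltonian (Psi enum \<Phi> k) \<Lambda> \<sigma>\<bar> \<le> infsum (\<lambda>V. supnorm (\<Phi> V)) (Sset \<Lambda> \<inter> ?T)"
      by (rule ham_diff[OF assms(1-3)]) (simp add: Psi_def)
    also have "\<dots> \<le> \<epsilon>"
    proof (rule tl)
      show "Sset \<Lambda> \<inter> ?T \<subseteq> Sset \<Lambda> - F"
      proof clarify
        fix i assume i: "k + 1 \<le> i" "enum i \<in> F"
        then have "i \<in> I0" by (simp add: I0_def)
        then have "i \<le> k0" unfolding k0_def using finI0 by simp
        then show False using i that by simp
      qed
    qed
    finally show "\<bar>hamiltonian \<Phi> \<Lambda> \<sigma> - hamiltonian (Psi enum \<Phi> k) \<Lambda> \<sigma>\<bar> \<le> \<epsilon>" .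
  qed
  then show ?thesis by blast
qed




definition mrg :: "int set \<Rightarrow> ('e::finite) config \<Rightarrow> 'e config \<Rightarrow> 'e config" where
  "mrg \<Lambda> \<omega> \<eta> = (\<lambda>i. if i \<in> \<Lambda> then \<omega> i else \<eta> i)"

definition spec :: "(('e::finite) config \<Rightarrow> real) \<Rightarrow> int set \<Rightarrow> 'e config set \<Rightarrow> 'e config \<Rightarrow> real" where
  "spec H \<Lambda> A \<eta> = (\<Sum>\<sigma>\<in>agree_off \<Lambda> \<eta>. indicator A \<sigma> * exp (- H \<sigma>)) / (\<Sum>\<sigma>\<in>agree_off \<Lambda> \<eta>. exp (- H \<sigma>))"

lemma gibbs_spec_eq: "gibbs_spec \<Phi> \<Lambda> A \<eta> = spec (hamiltonian \<Phi> \<Lambda>) \<Lambda> A \<eta>"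
  by (simp add: gibbs_spec_def spec_def)

lemma agree_off_eq: "agree_off \<Lambda> \<eta> = (\<lambda>\<omega>. mrg \<Lambda> \<omega> \<eta>) ` PiE \<Lambda> (\<lambda>_. UNIV)"
proof
  show "agree_off \<Lambda> \<eta> \<subseteq> (\<lambda>\<omega>. mrg \<Lambda> \<omega> \<eta>) ` PiE \<Lambda> (\<lambda>_. UNIV)"
  proof
    fix \<sigma> assume s: "\<sigma> \<in> agree_off \<Lambda> \<eta>"
    have "\<sigma> = mrg \<Lambda> (restrict \<sigma> \<Lambda>) \<eta>"
    proof
      fix i show "\<sigma> i = mrg \<Lambda> (restrict \<sigma> \<Lambda>) \<eta> i"
        using s by (cases "i \<in> \<Lambda>") (simp_all add: agree_off_def mrg_def)
    qed
    moreover have "restrict \<sigma> \<Lambda> \<in> PiE \<Lambda> (\<lambda>_. UNIV)" by simp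
    ultimately show "\<sigma> \<in> (\<lambda>\<omega>. mrg \<Lambda> \<omega> \<eta>) ` PiE \<Lambda> (\<lambda>_. UNIV)" by (rule image_eqI)
  qed
  show "(\<lambda>\<omega>. mrg \<Lambda> \<omega> \<eta>) ` PiE \<Lambda> (\<lambda>_. UNIV) \<subseteq> agree_off \<Lambda> \<eta>"
    by (auto simp: agree_off_def mrg_def)
qed

lemma inj_mrg: "inj_on (\<lambda>\<omega>. mrg \<Lambda> \<omega> \<eta>) (PiE \<Lambda> (\<lambda>_. UNIV))"
proof (rule inj_onI)
  fix \<omega> \<omega>' assume a: "\<omega> \<in> PiE \<Lambda> (\<lambda>_. UNIV)" "\<omega>' \<in> PiE \<Lambda> (\<lambda>_. UNIV)" and e: "mrg \<Lambda> \<omega> \<eta> = mrg \<Lambda> \<omega>' \<eta>"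
  show "\<omega> = \<omega>'"
  proof
    fix i show "\<omega> i = \<omega>' i"
    proof (cases "i \<in> \<Lambda>")
      case True then show ?thesis using fun_cong[OF e, of i] by (simp add: mrg_def)
    next
      case False then show ?thesis using a by (auto simp: PiE_def extensional_def)
    qed
  qed
qed

lemma sum_agree:
  "(\<Sum>\<sigma>\<in>agree_off \<Lambda> \<eta>. g \<sigma>) = (\<Sum>\<omega>\<in>PiE \<Lambda> (\<lambda>_. UNIV). g (mrg \<Lambda> \<omega> \<eta>))"
  unfolding agree_off_eq by (subst sum.reindex[OF inj_mrg]) (simp add: o_def)

lemma finite_agree: "finite \<Lambda> \<Longrightarrow> finite (agree_off \<Lambda> (\<eta>::('e::finite) config))"
  unfolding agree_off_eq by (intro finite_imageI finite_PiE) auto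

lemma eta_agree: "\<eta> \<in> agree_off \<Lambda> \<eta>"
  by (simp add: agree_off_def)

lemma spec_denom_pos:
  fixes H :: "('e::finite) config \<Rightarrow> real"
  assumes "finite \<Lambda>" shows "0 < (\<Sum>\<sigma>\<in>agree_off \<Lambda> \<eta>. exp (- H \<sigma>))"
  by (rule sum_pos2[OF finite_agree[OF assms] eta_agree]) auto

lemma spec_bounds:
  assumes "finite \<Lambda>"
  shows "0 \<le> spec H \<Lambda> A (\<eta>::('e::finite) config)" "spec H \<Lambda> A \<eta> \<le> 1"
proof -
  have d: "0 < (\<Sum>\<sigma>\<in>agree_off \<Lambda> \<eta>. exp (- H \<sigma>))" by (rule spec_denom_pos[OF assms])
  have n0: "0 \<le> (\<Sum>\<sigma>\<in>agree_off \<Lambda> \<eta>. indicator A \<sigma> * exp (- H \<sigma>))" by (intro sum_nonneg) simp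
  have n1: "(\<Sum>\<sigma>\<in>agree_off \<Lambda> \<eta>. indicator A \<sigma> * exp (- H \<sigma>)) \<le> (\<Sum>\<sigma>\<in>agree_off \<Lambda> \<eta>. exp (- H \<sigma>))"
    by (intro sum_mono) (simp add: indicator_def)
  show "0 \<le> spec H \<Lambda> A \<eta>" unfolding spec_def using d n0 by simp
  show "spec H \<Lambda> A \<eta> \<le> 1" unfolding spec_def using d n1 by simp
qed

lemma ratio_pert:
  fixes a b a' b' c :: real
  assumes "0 < b" "0 \<le> a" "a \<le> b" "0 \<le> c"
    and "a' \<le> exp c * a" "exp (- c) * a \<le> a'" "b' \<le> exp c * b" "exp (- c) * b \<le> b'"
  shows "\<bar>a' / b' - a / b\<bar> \<le> exp (2 * c) - 1"
proof -
  define p where "p = a / b"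
  have p01: "0 \<le> p" "p \<le> 1" using assms by (auto simp: p_def)
  have b'pos: "0 < b'" using assms(1,8) by (smt (verit) exp_gt_zero mult_pos_pos)
  have a'nn: "0 \<le> a'" using assms(2,6) by (smt (verit) exp_gt_zero mult_nonneg_nonneg)
  have e: "exp (2 * c) = exp c / exp (- c)" by (simp add: exp_minus field_simps flip: exp_add)
  have up: "a' / b' \<le> exp (2 * c) * p"
  proof -
    have "a' / b' \<le> (exp c * a) / (exp (- c) * b)"
      by (rule frac_le) (use assms b'pos a'nn in auto)
    also have "\<dots> = exp (2 * c) * p" unfolding e p_def by (simp add: field_simps)
    finally show ?thesis .
  qed
  have lo: "exp (- (2 * c)) * p \<le> a' / b'"
  proof -
    have "(exp (- c) * a) / (exp c * b) \<le> a' / b'"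
      by (rule frac_le) (use assms b'pos a'nn in auto)
    moreover have "(exp (- c) * a) / (exp c * b) = exp (- (2 * c)) * p"
      unfolding p_def by (simp add: exp_minus field_simps flip: exp_add)
    ultimately show ?thesis by simp
  qed
  have g1: "1 \<le> exp (2 * c)" using assms(4) by simp
  have g2: "1 - exp (- (2 * c)) \<le> exp (2 * c) - 1"
    using exp_ge_add_one_self[of "2 * c"] exp_ge_add_one_self[of "- (2 * c)"] by linarith
  have "a' / b' - p \<le> exp (2 * c) - 1"
  proof -
    have "a' / b' - p \<le> (exp (2 * c) - 1) * p" using up by (simp add: algebra_simps)
    also have "\<dots> \<le> exp (2 * c) - 1"
      by (rule mult_left_le) (use p01 g1 in auto)
    finally show ?thesis .
  qed
  moreover have "p - a' / b' \<le> exp (2 * c) - 1"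
  proof -
    have "p - a' / b' \<le> (1 - exp (- (2 * c))) * p" using lo by (simp add: algebra_simps)
    also have "\<dots> \<le> 1 - exp (- (2 * c))"
    proof (rule mult_left_le)
      show "0 \<le> 1 - exp (- (2 * c))" using assms(4) by simp
    qed (use p01 in auto)
    finally show ?thesis using g2 by simp
  qed
  ultimately show ?thesis unfolding p_def by linarith
qed

lemma spec_pert:
  assumes "finite \<Lambda>" "\<And>\<sigma>. \<bar>H \<sigma> - H' \<sigma>\<bar> \<le> c"
  shows "\<bar>spec H' \<Lambda> A (\<eta>::('e::finite) config) - spec H \<Lambda> A \<eta>\<bar> \<le> exp (2 * c) - 1"
proof -
  let ?S = "agree_off \<Lambda> \<eta>"
  have c0: "0 \<le> c" using assms(2)[of \<eta>] by simp
  have w1: "exp (- H' \<sigma>) \<le> exp c * exp (- H \<sigma>)" for \<sigma>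
    using assms(2)[of \<sigma>] by (simp flip: exp_add)
  have w2: "exp (- c) * exp (- H \<sigma>) \<le> exp (- H' \<sigma>)" for \<sigma>
    using assms(2)[of \<sigma>] by (simp flip: exp_add)
  show ?thesis unfolding spec_def
  proof (rule ratio_pert)
    show "0 < (\<Sum>\<sigma>\<in>?S. exp (- H \<sigma>))" by (rule spec_denom_pos[OF assms(1)])
    show "0 \<le> (\<Sum>\<sigma>\<in>?S. indicator A \<sigma> * exp (- H \<sigma>))" by (intro sum_nonneg) simp
    show "(\<Sum>\<sigma>\<in>?S. indicator A \<sigma> * exp (- H \<sigma>)) \<le> (\<Sum>\<sigma>\<in>?S. exp (- H \<sigma>))"
      by (intro sum_mono) (simp add: indicator_def)
    show "0 \<le> c" by (rule c0)
    show "(\<Sum>\<sigma>\<in>?S. indicator A \<sigma> * exp (- H' \<sigma>)) \<le> exp c * (\<Sum>\<sigma>\<in>?S. indicator A \<sigma> * exp (- H \<sigma>))"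
      unfolding sum_distrib_left by (intro sum_mono) (use w1 in \<open>auto simp: indicator_def\<close>)
    show "exp (- c) * (\<Sum>\<sigma>\<in>?S. indicator A \<sigma> * exp (- H \<sigma>)) \<le> (\<Sum>\<sigma>\<in>?S. indicator A \<sigma> * exp (- H' \<sigma>))"
      unfolding sum_distrib_left by (intro sum_mono) (use w2 in \<open>auto simp: indicator_def\<close>)
    show "(\<Sum>\<sigma>\<in>?S. exp (- H' \<sigma>)) \<le> exp c * (\<Sum>\<sigma>\<in>?S. exp (- H \<sigma>))"
      unfolding sum_distrib_left by (intro sum_mono) (use w1 in auto)
    show "exp (- c) * (\<Sum>\<sigma>\<in>?S. exp (- H \<sigma>)) \<le> (\<Sum>\<sigma>\<in>?S. exp (- H' \<sigma>))"
      unfolding sum_distrib_left by (intro sum_mono) (use w2 in auto)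
  qed
qed

lemma spec_alt:
  "spec H \<Lambda> A \<eta> = (\<Sum>\<omega>\<in>PiE \<Lambda> (\<lambda>_. UNIV). indicator A (mrg \<Lambda> \<omega> \<eta>) * exp (- H (mrg \<Lambda> \<omega> \<eta>))) /
     (\<Sum>\<omega>\<in>PiE \<Lambda> (\<lambda>_. UNIV). exp (- H (mrg \<Lambda> \<omega> \<eta>)))"
  unfolding spec_def sum_agree ..

lemma mrg_measurable: "(\<lambda>\<eta>. mrg \<Lambda> \<omega> \<eta>) \<in> measurable (Xspace::('e::finite) config measure) Xspace"
proof -
  have "(\<lambda>\<eta> i. (\<lambda>i \<eta>. if i \<in> \<Lambda> then \<omega> i else \<eta> i) i \<eta>) \<in> measurable (Xspace::'e config measure) (PiM UNIV (\<lambda>_::int. count_space (UNIV::'e set)))"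
  proof (rule measurable_PiM_single')
    fix i :: int
    show "(\<lambda>\<eta>::'e config. if i \<in> \<Lambda> then \<omega> i else \<eta> i) \<in> measurable Xspace (count_space UNIV)"
    proof (cases "i \<in> \<Lambda>")
      case False
      then show ?thesis unfolding Xspace_def by (simp add: measurable_component_singleton)
    qed simp
  qed (simp add: space_PiM)
  then show ?thesis unfolding mrg_def[abs_def] Xspace_def[symmetric] by simp
qed

lemma spec_measurable:
  assumes "H \<in> borel_measurable (Xspace::('e::finite) config measure)" "A \<in> sets (Xspace::('e::finite) config measure)"
  shows "spec H \<Lambda> A \<in> borel_measurable (Xspace::'e config measure)"
proof -
  have m: "(\<lambda>\<eta>. mrg \<Lambda> \<omega> \<eta>) \<in> measurable (Xspace::'e config measure) Xspace" for \<omega>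
    by (rule mrg_measurable)
  have hm: "(\<lambda>\<eta>. H (mrg \<Lambda> \<omega> \<eta>)) \<in> borel_measurable (Xspace::'e config measure)" for \<omega>
    using measurable_compose[OF m assms(1)] .
  have im: "(\<lambda>\<eta>. indicator A (mrg \<Lambda> \<omega> \<eta>) :: real) \<in> borel_measurable (Xspace::'e config measure)" for \<omega>
    using measurable_compose[OF m borel_measurable_indicator[OF assms(2)]] .
  have em: "(\<lambda>\<eta>. exp (- H (mrg \<Lambda> \<omega> \<eta>))) \<in> borel_measurable (Xspace::'e config measure)" for \<omega>
    using hm[of \<omega>] by measurable
  show ?thesis
    unfolding spec_alt[abs_def]
    by (intro borel_measurable_divide borel_measurable_sum borel_measurable_times em im)
qed

lemma spec_loc:
  assumes "loc J H" "loc K (\<lambda>\<sigma>::('e::finite) config. \<sigma> \<in> A)"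
  shows "loc (J \<union> K) (spec H \<Lambda> A)"
  unfolding loc_def
proof (intro conjI allI impI)
  show "finite (J \<union> K)" using assms by (simp add: loc_def)
  fix \<eta> \<eta>' :: "'e config" assume ag: "\<forall>i\<in>J \<union> K. \<eta> i = \<eta>' i"
  have ag2: "\<forall>i\<in>J \<union> K. mrg \<Lambda> \<omega> \<eta> i = mrg \<Lambda> \<omega> \<eta>' i" for \<omega> using ag by (simp add: mrg_def)
  have h: "H (mrg \<Lambda> \<omega> \<eta>) = H (mrg \<Lambda> \<omega> \<eta>')" for \<omega> using assms(1) ag2[of \<omega>] unfolding loc_def by blast
  have i: "(mrg \<Lambda> \<omega> \<eta> \<in> A) = (mrg \<Lambda> \<omega> \<eta>' \<in> A)" for \<omega> using assms(2) ag2[of \<omega>] unfolding loc_def by blast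
  show "spec H \<Lambda> A \<eta> = spec H \<Lambda> A \<eta>'"
    unfolding spec_alt using h i by (simp add: indicator_def)
qed




lemma int_bounded:
  fixes f :: "('e::finite) config \<Rightarrow> real"
  assumes "prob_space M" "sets M = sets (Xspace::'e config measure)" "f \<in> borel_measurable Xspace"
    "\<And>x. \<bar>f x\<bar> \<le> B"
  shows "integrable M f"
proof -
  interpret prob_space M by fact
  have m: "f \<in> borel_measurable M" by (subst measurable_cong_sets[OF assms(2) refl]) (rule assms(3))
  show ?thesis by (rule integrable_const_bound[where B=B]) (use assms(4) m in auto)
qed

lemma int_close:
  fixes f g :: "'a \<Rightarrow> real"
  assumes "prob_space M" "integrable M f" "integrable M g" "\<And>x. \<bar>f x - g x\<bar> \<le> e"
  shows "\<bar>(\<integral>x. f x \<partial>M) - (\<integral>x. g x \<partial>M)\<bar> \<le> e"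
proof -
  interpret prob_space M by fact
  have "\<bar>(\<integral>x. f x \<partial>M) - (\<integral>x. g x \<partial>M)\<bar> = \<bar>\<integral>x. f x - g x \<partial>M\<bar>"
    using assms(2,3) by simp
  also have "\<dots> \<le> (\<integral>x. \<bar>f x - g x\<bar> \<partial>M)"
    using integral_norm_bound[of M "\<lambda>x. f x - g x"] by simp
  also have "\<dots> \<le> (\<integral>x. e \<partial>M)"
    by (rule integral_mono) (use assms in auto)
  also have "\<dots> = e" by (simp add: prob_space)
  finally show ?thesis .
qed

lemma spec_abs: "finite \<Lambda> \<Longrightarrow> \<bar>spec H \<Lambda> A (\<eta>::('e::finite) config)\<bar> \<le> 1"
  using spec_bounds[of \<Lambda> H A \<eta>] by linarith

lemma gibbsD:
  assumes "gibbs_measure \<Phi> \<mu>"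
  shows "sets \<mu> = sets Xspace" "prob_space \<mu>"
    "\<And>\<Lambda> A. finite \<Lambda> \<Longrightarrow> A \<in> sets \<mu> \<Longrightarrow> emeasure \<mu> A = (\<integral>\<^sup>+ \<eta>. ennreal (gibbs_spec \<Phi> \<Lambda> A \<eta>) \<partial>\<mu>)"
  using assms unfolding gibbs_measure_def by auto

lemma measure_spec_int:
  fixes \<Phi> :: "('e::finite) interaction"
  assumes I: "is_interaction \<Phi>" "UAC \<Phi>" and g: "gibbs_measure \<Phi> M" and L: "finite \<Lambda>"
    and A: "A \<in> sets (Xspace :: 'e config measure)"
  shows "measure M A = (\<integral>\<eta>. spec (hamiltonian \<Phi> \<Lambda>) \<Lambda> A \<eta> \<partial>M)"
proof -
  note gD = gibbsD[OF g]
  let ?g = "spec (hamiltonian \<Phi> \<Lambda>) \<Lambda> A"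
  have gm: "?g \<in> borel_measurable Xspace"
    by (rule spec_measurable[OF ham_measurable[OF I L] A])
  have gi: "integrable M ?g"
    by (rule int_bounded[OF gD(2) gD(1) gm, of 1]) (rule spec_abs[OF L])
  have "emeasure M A = (\<integral>\<^sup>+ \<eta>. ennreal (?g \<eta>) \<partial>M)"
    using gD(3)[OF L] A gD(1) by (simp add: gibbs_spec_eq)
  also have "\<dots> = ennreal (\<integral>\<eta>. ?g \<eta> \<partial>M)"
    by (rule nn_integral_eq_integral[OF gi]) (use spec_bounds[OF L] in auto)
  finally have "emeasure M A = ennreal (\<integral>\<eta>. ?g \<eta> \<partial>M)" .
  moreover have "0 \<le> (\<integral>\<eta>. ?g \<eta> \<partial>M)" by (rule Bochner_Integration.integral_nonneg) (use spec_bounds[OF L] in auto)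
  ultimately show ?thesis by (simp add: measure_def)
qed

lemma weak_loc:
  fixes f :: "('e::finite) config \<Rightarrow> real"
  assumes "weak_star_conv \<nu> \<mu>" "loc J f"
  shows "(\<lambda>j. \<integral>x. f x \<partial>\<nu> j) \<longlonglongrightarrow> (\<integral>x. f x \<partial>\<mu>)"
  using assms(1) loc_continuous[OF assms(2)] unfolding weak_star_conv_def by blast

lemma DLR_local:
  fixes \<Phi> :: "('e::finite) interaction"
    and enum :: "nat \<Rightarrow> int set"
    and \<nu> :: "nat \<Rightarrow> 'e config measure"
  assumes I: "is_interaction \<Phi>" "UAC \<Phi>"
    and bij: "bij_betw enum {i. 1 \<le> i} crossing_sets"
    and gib: "\<And>k. gibbs_measure (Psi enum \<Phi> k) (\<nu> k)"
    and r: "strict_mono r" and mu: "sets \<mu> = sets Xspace" "prob_space \<mu>"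
    and weak: "weak_star_conv (\<lambda>j. \<nu> (r j)) \<mu>"
    and L: "finite \<Lambda>" and A: "A \<in> loc_sets"
  shows "measure \<mu> A = (\<integral>\<eta>. spec (hamiltonian \<Phi> \<Lambda>) \<Lambda> A \<eta> \<partial>\<mu>)"
proof -
  have As: "A \<in> sets (Xspace :: 'e config measure)" using loc_sets_sets[OF A] .
  obtain K where K: "loc K (\<lambda>\<sigma>::'e config. \<sigma> \<in> A)" using A by (auto simp: loc_sets_def)
  obtain KA where KA: "loc KA (indicator A :: 'e config \<Rightarrow> real)" using loc_sets_ind[OF A] by blast
  note IP = Psi_interaction[OF I(1)] Psi_UAC[OF I]
  define g where "g k = spec (hamiltonian (Psi enum \<Phi> k) \<Lambda>) \<Lambda> A" for k
  define g0 where "g0 = spec (hamiltonian \<Phi> \<Lambda>) \<Lambda> A"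
  have nsets: "sets (\<nu> k) = sets Xspace" and nprob: "prob_space (\<nu> k)" for k
    using gibbsD[OF gib[of k]] by auto
  have gm: "g k \<in> borel_measurable Xspace" for k
    unfolding g_def by (rule spec_measurable[OF ham_measurable[OF IP L] As])
  have g0m: "g0 \<in> borel_measurable Xspace"
    unfolding g0_def by (rule spec_measurable[OF ham_measurable[OF I L] As])
  have gb: "\<bar>g k x\<bar> \<le> 1" for k x unfolding g_def by (rule spec_abs[OF L])
  have g0b: "\<bar>g0 x\<bar> \<le> 1" for x unfolding g0_def by (rule spec_abs[OF L])
  have a: "measure (\<nu> k) A = (\<integral>\<eta>. g k \<eta> \<partial>\<nu> k)" for k
    unfolding g_def by (rule measure_spec_int[OF IP gib L As])
  have b: "(\<lambda>j. measure (\<nu> (r j)) A) \<longlonglongrightarrow> measure \<mu> A"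
  proof -
    have sp: "space (\<nu> k) = UNIV" for k using sets_eq_imp_space_eq[OF nsets[of k]] by simp
    have spm: "space \<mu> = UNIV" using sets_eq_imp_space_eq[OF mu(1)] by simp
    have "(\<lambda>j. \<integral>x. (indicator A x :: real) \<partial>\<nu> (r j)) \<longlonglongrightarrow> (\<integral>x. indicator A x \<partial>\<mu>)"
      using weak_loc[OF weak KA] by simp
    then show ?thesis using sp spm by simp
  qed
  have c: "(\<lambda>j. \<integral>\<eta>. g (r j) \<eta> \<partial>\<nu> (r j)) \<longlonglongrightarrow> (\<integral>\<eta>. g0 \<eta> \<partial>\<mu>)"
  proof (rule LIMSEQ_I)
    fix e :: real assume e: "0 < e"
    define \<epsilon> where "\<epsilon> = e / 4"
    have \<epsilon>: "0 < \<epsilon>" using e by (simp add: \<epsilon>_def)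
    define \<delta> where "\<delta> = ln (1 + \<epsilon>) / 2"
    have \<delta>: "0 < \<delta>" using \<epsilon> by (simp add: \<delta>_def)
    have ed: "exp (2 * \<delta>) - 1 = \<epsilon>" using \<epsilon> by (simp add: \<delta>_def)
    obtain h J where hJ: "loc J h" and hb: "\<And>\<sigma>. \<bar>hamiltonian \<Phi> \<Lambda> \<sigma> - h \<sigma>\<bar> \<le> \<delta>"
      using ham_approx[OF I L \<delta>] by blast
    define gh where "gh = spec h \<Lambda> A"
    have ghl: "loc (J \<union> K) gh" unfolding gh_def by (rule spec_loc[OF hJ K])
    have ghm: "gh \<in> borel_measurable Xspace" by (rule loc_measurable[OF ghl])
    have ghb: "\<bar>gh x\<bar> \<le> 1" for x unfolding gh_def by (rule spec_abs[OF L])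
    have gh0: "\<bar>gh x - g0 x\<bar> \<le> \<epsilon>" for x
      unfolding gh_def g0_def using spec_pert[OF L hb, where A=A and \<eta>=x] ed by simp
    obtain k0 where k0: "\<And>k \<sigma>. k \<ge> k0 \<Longrightarrow> \<bar>hamiltonian \<Phi> \<Lambda> \<sigma> - hamiltonian (Psi enum \<Phi> k) \<Lambda> \<sigma>\<bar> \<le> \<delta>"
      using Psi_ham_conv[OF I L \<delta> bij] by blast
    have gk0: "\<bar>g k x - g0 x\<bar> \<le> \<epsilon>" if "k \<ge> k0" for k x
      unfolding g_def g0_def using spec_pert[OF L k0[OF that], where A=A and \<eta>=x] ed by simp
    have "(\<lambda>j. \<integral>x. gh x \<partial>\<nu> (r j)) \<longlonglongrightarrow> (\<integral>x. gh x \<partial>\<mu>)" by (rule weak_loc[OF weak ghl])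
    then obtain N1 where N1: "\<And>j. j \<ge> N1 \<Longrightarrow> norm ((\<integral>x. gh x \<partial>\<nu> (r j)) - (\<integral>x. gh x \<partial>\<mu>)) < \<epsilon>"
      using LIMSEQ_D[OF _ \<epsilon>] by blast
    show "\<exists>no. \<forall>n\<ge>no. norm ((\<integral>\<eta>. g (r n) \<eta> \<partial>\<nu> (r n)) - (\<integral>\<eta>. g0 \<eta> \<partial>\<mu>)) < e"
    proof (intro exI allI impI)
      fix j assume j: "max N1 k0 \<le> j"
      have rj: "k0 \<le> r j" using j seq_suble[OF r, of j] by simp
      have i1: "integrable (\<nu> (r j)) (g (r j))" by (rule int_bounded[OF nprob nsets gm gb])
      have i2: "integrable (\<nu> (r j)) gh" by (rule int_bounded[OF nprob nsets ghm ghb])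
      have i3: "integrable \<mu> gh" by (rule int_bounded[OF mu(2) mu(1) ghm ghb])
      have i4: "integrable \<mu> g0" by (rule int_bounded[OF mu(2) mu(1) g0m g0b])
      have d1: "\<bar>(\<integral>x. g (r j) x \<partial>\<nu> (r j)) - (\<integral>x. gh x \<partial>\<nu> (r j))\<bar> \<le> 2 * \<epsilon>"
      proof (rule int_close[OF nprob i1 i2])
        fix x
        show "\<bar>g (r j) x - gh x\<bar> \<le> 2 * \<epsilon>" using gk0[OF rj, of x] gh0[of x] by linarith
      qed
      have d2: "\<bar>(\<integral>x. gh x \<partial>\<nu> (r j)) - (\<integral>x. gh x \<partial>\<mu>)\<bar> < \<epsilon>" using N1[of j] j by simp
      have d3: "\<bar>(\<integral>x. gh x \<partial>\<mu>) - (\<integral>x. g0 x \<partial>\<mu>)\<bar> \<le> \<epsilon>"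
        by (rule int_close[OF mu(2) i3 i4]) (use gh0 in auto)
      show "norm ((\<integral>\<eta>. g (r j) \<eta> \<partial>\<nu> (r j)) - (\<integral>\<eta>. g0 \<eta> \<partial>\<mu>)) < e"
        using d1 d2 d3 unfolding real_norm_def \<epsilon>_def by arith
    qed
  qed
  have "(\<lambda>j. measure (\<nu> (r j)) A) \<longlonglongrightarrow> (\<integral>\<eta>. g0 \<eta> \<partial>\<mu>)" using c by (simp add: a)
  then show ?thesis using LIMSEQ_unique[OF b] by (simp add: g0_def)
qed




lemma spec_sums:
  fixes H :: "('e::finite) config \<Rightarrow> real"
  assumes "disjoint_family A"
  shows "(\<lambda>i. spec H \<Lambda> (A i) \<eta>) sums spec H \<Lambda> (\<Union>i. A i) \<eta>"
proof -
  let ?S = "agree_off \<Lambda> \<eta>"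
  have d: "\<And>i j. i \<noteq> j \<Longrightarrow> A i \<inter> A j = {}" using assms unfolding disjoint_family_on_def by blast
  have "(\<lambda>i. \<Sum>\<sigma>\<in>?S. indicator (A i) \<sigma> * exp (- H \<sigma>)) sums (\<Sum>\<sigma>\<in>?S. indicator (\<Union>i. A i) \<sigma> * exp (- H \<sigma>))"
    by (rule sums_sum) (rule sums_mult2[OF indicator_sums[OF d]])
  then show ?thesis unfolding spec_def by (rule sums_divide)
qed

lemma spec_compl:
  fixes H :: "('e::finite) config \<Rightarrow> real"
  assumes "finite \<Lambda>"
  shows "spec H \<Lambda> (UNIV - A) \<eta> = 1 - spec H \<Lambda> A \<eta>"
proof -
  let ?S = "agree_off \<Lambda> \<eta>"
  let ?Z = "\<Sum>\<sigma>\<in>?S. exp (- H \<sigma>)"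
  have Z: "0 < ?Z" by (rule spec_denom_pos[OF assms])
  have "(\<Sum>\<sigma>\<in>?S. indicator (UNIV - A) \<sigma> * exp (- H \<sigma>)) = (\<Sum>\<sigma>\<in>?S. exp (- H \<sigma>) - indicator A \<sigma> * exp (- H \<sigma>))"
    by (rule sum.cong) (auto simp: indicator_def)
  also have "\<dots> = ?Z - (\<Sum>\<sigma>\<in>?S. indicator A \<sigma> * exp (- H \<sigma>))" by (simp add: sum_subtractf)
  finally show ?thesis unfolding spec_def using Z by (simp add: diff_divide_distrib)
qed

lemma spec_empty: "spec H \<Lambda> {} \<eta> = 0"
  by (simp add: spec_def)

lemma gibbs_ext:
  fixes \<Phi> :: "('e::finite) interaction"
    and enum :: "nat \<Rightarrow> int set"
    and \<nu> :: "nat \<Rightarrow> 'e config measure"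
  assumes I: "is_interaction \<Phi>" "UAC \<Phi>"
    and bij: "bij_betw enum {i. 1 \<le> i} crossing_sets"
    and gib: "\<And>k. gibbs_measure (Psi enum \<Phi> k) (\<nu> k)"
    and r: "strict_mono r" and mu: "sets \<mu> = sets Xspace" "prob_space \<mu>"
    and weak: "weak_star_conv (\<lambda>j. \<nu> (r j)) \<mu>"
    and L: "finite \<Lambda>" and A: "A \<in> sets (Xspace :: 'e config measure)"
  shows "measure \<mu> A = (\<integral>\<eta>. spec (hamiltonian \<Phi> \<Lambda>) \<Lambda> A \<eta> \<partial>\<mu>)"
proof -
  interpret prob_space \<mu> by fact
  let ?H = "hamiltonian \<Phi> \<Lambda>"
  have sp: "space \<mu> = UNIV" using sets_eq_imp_space_eq[OF mu(1)] by simp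
  have A': "A \<in> sigma_sets UNIV loc_sets" using A sets_X_gen by blast
  have Xs: "B \<in> sets (Xspace :: 'e config measure)" if "B \<in> sigma_sets UNIV loc_sets" for B :: "'e config set"
    using that sets_X_gen by blast
  have Ms: "B \<in> sets \<mu>" if "B \<in> sigma_sets UNIV loc_sets" for B :: "'e config set"
    using Xs[OF that] mu(1) by simp
  have si: "integrable \<mu> (spec ?H \<Lambda> B)" if "B \<in> sigma_sets UNIV loc_sets" for B :: "'e config set"
  proof -
    have m: "spec ?H \<Lambda> B \<in> borel_measurable Xspace"
      by (rule spec_measurable[OF ham_measurable[OF I L] Xs[OF that]])
    show ?thesis
      by (rule int_bounded[OF mu(2) mu(1) m, of 1]) (rule spec_abs[OF L])
  qed
  show ?thesis
  proof (rule sigma_sets_induct_disjoint[OF Int_stable_loc _ A', where P = "\<lambda>B. measure \<mu> B = (\<integral>\<eta>. spec ?H \<Lambda> B \<eta> \<partial>\<mu>)"])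
    show "loc_sets \<subseteq> Pow UNIV" by simp
  next
    fix B :: "'e config set" assume "B \<in> loc_sets"
    then show "measure \<mu> B = (\<integral>\<eta>. spec ?H \<Lambda> B \<eta> \<partial>\<mu>)"
      by (rule DLR_local[OF I bij gib r mu weak L])
  next
    show "measure \<mu> {} = (\<integral>\<eta>. spec ?H \<Lambda> {} \<eta> \<partial>\<mu>)" by (simp add: spec_empty)
  next
    fix B :: "'e config set" assume B: "B \<in> sigma_sets UNIV loc_sets" and P: "measure \<mu> B = (\<integral>\<eta>. spec ?H \<Lambda> B \<eta> \<partial>\<mu>)"
    have "measure \<mu> (UNIV - B) = 1 - measure \<mu> B"
      using finite_measure_compl[OF Ms[OF B]] prob_space sp by simp
    also have "\<dots> = (\<integral>\<eta>. 1 - spec ?H \<Lambda> B \<eta> \<partial>\<mu>)"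
      using P si[OF B] by (simp add: prob_space)
    also have "\<dots> = (\<integral>\<eta>. spec ?H \<Lambda> (UNIV - B) \<eta> \<partial>\<mu>)"
      by (simp add: spec_compl[OF L])
    finally show "measure \<mu> (UNIV - B) = (\<integral>\<eta>. spec ?H \<Lambda> (UNIV - B) \<eta> \<partial>\<mu>)" .
  next
    fix B :: "nat \<Rightarrow> 'e config set"
    assume d: "disjoint_family B" and rB: "range B \<subseteq> sigma_sets UNIV loc_sets"
      and P: "\<And>i. measure \<mu> (B i) = (\<integral>\<eta>. spec ?H \<Lambda> (B i) \<eta> \<partial>\<mu>)"
    have Bs: "B i \<in> sigma_sets UNIV loc_sets" for i using rB by blast
    have ms: "(\<lambda>i. measure \<mu> (B i)) sums measure \<mu> (\<Union>i. B i)"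
      by (rule finite_measure_UNION) (use Ms[OF Bs] d in auto)
    have ss: "(\<lambda>i. spec ?H \<Lambda> (B i) \<eta>) sums spec ?H \<Lambda> (\<Union>i. B i) \<eta>" for \<eta>
      by (rule spec_sums[OF d])
    have nn: "0 \<le> spec ?H \<Lambda> (B i) \<eta>" for i \<eta> using spec_bounds[OF L] by blast
    have "(\<integral>\<eta>. spec ?H \<Lambda> (\<Union>i. B i) \<eta> \<partial>\<mu>) = (\<integral>\<eta>. (\<Sum>i. spec ?H \<Lambda> (B i) \<eta>) \<partial>\<mu>)"
      by (rule Bochner_Integration.integral_cong[OF refl]) (rule sums_unique[OF ss])
    also have "\<dots> = (\<Sum>i. (\<integral>\<eta>. spec ?H \<Lambda> (B i) \<eta> \<partial>\<mu>))"
    proof (rule integral_suminf)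
      show "integrable \<mu> (spec ?H \<Lambda> (B i))" for i by (rule si[OF Bs])
      show "AE x in \<mu>. summable (\<lambda>i. norm (spec ?H \<Lambda> (B i) x))"
        using ss nn by (auto intro: sums_summable)
      have "summable (\<lambda>i. measure \<mu> (B i))" using ms by (rule sums_summable)
      then show "summable (\<lambda>i. \<integral>x. norm (spec ?H \<Lambda> (B i) x) \<partial>\<mu>)"
        using P nn by simp
    qed
    also have "\<dots> = (\<Sum>i. measure \<mu> (B i))" using P by simp
    also have "\<dots> = measure \<mu> (\<Union>i. B i)" using sums_unique[OF ms] by simp
    finally show "measure \<mu> (\<Union>i. B i) = (\<integral>\<eta>. spec ?H \<Lambda> (\<Union>i. B i) \<eta> \<partial>\<mu>)" by simp
  qed
qed

lemma gibbs_limit: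
  fixes \<Phi> :: "('e::finite) interaction"
    and enum :: "nat \<Rightarrow> int set"
    and \<nu> :: "nat \<Rightarrow> 'e config measure"
  assumes I: "is_interaction \<Phi>" "UAC \<Phi>"
    and bij: "bij_betw enum {i. 1 \<le> i} crossing_sets"
    and gib: "\<And>k. gibbs_measure (Psi enum \<Phi> k) (\<nu> k)"
    and r: "strict_mono r" and mu: "sets \<mu> = sets Xspace" "prob_space \<mu>"
    and weak: "weak_star_conv (\<lambda>j. \<nu> (r j)) \<mu>"
  shows "gibbs_measure \<Phi> \<mu>"
  unfolding gibbs_measure_def
proof (intro conjI allI impI)
  interpret prob_space \<mu> by fact
  show "sets \<mu> = sets Xspace" "prob_space \<mu>" by (fact mu)+
  fix \<Lambda> :: "int set" and A :: "'e config set" assume L: "finite \<Lambda>" and A: "A \<in> sets \<mu>"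
  have AX: "A \<in> sets (Xspace :: 'e config measure)" using A mu(1) by simp
  let ?g = "spec (hamiltonian \<Phi> \<Lambda>) \<Lambda> A"
  have m: "?g \<in> borel_measurable Xspace"
    by (rule spec_measurable[OF ham_measurable[OF I L] AX])
  have gi: "integrable \<mu> ?g"
    by (rule int_bounded[OF mu(2) mu(1) m, of 1]) (rule spec_abs[OF L])
  have "emeasure \<mu> A = ennreal (measure \<mu> A)" by (rule emeasure_eq_measure)
  also have "\<dots> = ennreal (\<integral>\<eta>. ?g \<eta> \<partial>\<mu>)"
    using gibbs_ext[OF I bij gib r mu weak L AX] by simp
  also have "\<dots> = (\<integral>\<^sup>+ \<eta>. ennreal (?g \<eta>) \<partial>\<mu>)"
    by (rule nn_integral_eq_integral[symmetric, OF gi]) (use spec_bounds[OF L] in auto)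
  finally show "emeasure \<mu> A = (\<integral>\<^sup>+ \<eta>. ennreal (gibbs_spec \<Phi> \<Lambda> A \<eta>) \<partial>\<mu>)"
    by (simp add: gibbs_spec_eq)
qed




definition sd :: "'a set \<Rightarrow> 'a set \<Rightarrow> 'a set" where "sd B C = (B - C) \<union> (C - B)"

lemma loc_sets_UN: "(\<And>i. i < (N::nat) \<Longrightarrow> C i \<in> loc_sets) \<Longrightarrow> (\<Union>i<N. C i) \<in> loc_sets"
proof (induction N)
  case 0 then show ?case by (simp add: loc_sets_empty)
next
  case (Suc N)
  have "(\<Union>i<Suc N. C i) = C N \<union> (\<Union>i<N. C i)" by (simp add: lessThan_Suc)
  moreover have "C N \<in> loc_sets" using Suc.prems by simp
  moreover have "(\<Union>i<N. C i) \<in> loc_sets" using Suc.IH Suc.prems by simp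
  ultimately show ?case using loc_sets_Un by simp
qed

lemma approx_sets:
  fixes M1 M2 :: "('e::finite) config measure"
  assumes fm: "finite_measure M1" "finite_measure M2"
    and s: "sets M1 = sets Xspace" "sets M2 = sets Xspace"
    and B: "B \<in> sets (Xspace :: 'e config measure)"
  shows "\<forall>\<delta>>0. \<exists>C\<in>loc_sets. measure M1 (sd B C) < \<delta> \<and> measure M2 (sd B C) < \<delta>"
proof -
  interpret M1: finite_measure M1 by fact
  interpret M2: finite_measure M2 by fact
  have B': "B \<in> sigma_sets UNIV loc_sets" using B sets_X_gen by blast
  have Xs: "A \<in> sets (Xspace :: 'e config measure)" if "A \<in> sigma_sets UNIV loc_sets" for A :: "'e config set"
    using that sets_X_gen by blast
  show ?thesis
  proof (rule sigma_sets_induct_disjoint[OF Int_stable_loc _ B',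
        where P = "\<lambda>B. \<forall>\<delta>>0. \<exists>C\<in>loc_sets. measure M1 (sd B C) < \<delta> \<and> measure M2 (sd B C) < \<delta>"])
    show "loc_sets \<subseteq> Pow UNIV" by simp
  next
    fix A :: "'e config set" assume "A \<in> loc_sets"
    then show "\<forall>\<delta>>0. \<exists>C\<in>loc_sets. measure M1 (sd A C) < \<delta> \<and> measure M2 (sd A C) < \<delta>"
      by (auto simp: sd_def intro!: bexI[of _ A])
  next
    show "\<forall>\<delta>>0. \<exists>C\<in>loc_sets. measure M1 (sd {} C) < \<delta> \<and> measure M2 (sd {} C) < \<delta>"
      using loc_sets_empty by (auto simp: sd_def intro!: bexI[of _ "{}"])
  next
    fix A :: "'e config set"
    assume P: "\<forall>\<delta>>0. \<exists>C\<in>loc_sets. measure M1 (sd A C) < \<delta> \<and> measure M2 (sd A C) < \<delta>"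
    show "\<forall>\<delta>>0. \<exists>C\<in>loc_sets. measure M1 (sd (UNIV - A) C) < \<delta> \<and> measure M2 (sd (UNIV - A) C) < \<delta>"
    proof (intro allI impI)
      fix \<delta> :: real assume "0 < \<delta>"
      then obtain C where C: "C \<in> loc_sets" "measure M1 (sd A C) < \<delta>" "measure M2 (sd A C) < \<delta>"
        using P by blast
      have "sd (UNIV - A) (UNIV - C) = sd A C" by (auto simp: sd_def)
      then show "\<exists>C\<in>loc_sets. measure M1 (sd (UNIV - A) C) < \<delta> \<and> measure M2 (sd (UNIV - A) C) < \<delta>"
        using C loc_sets_compl[OF C(1)] by (intro bexI[of _ "UNIV - C"]) auto
    qed
  next
    fix A :: "nat \<Rightarrow> 'e config set"
    assume d: "disjoint_family A" and rA: "range A \<subseteq> sigma_sets UNIV loc_sets"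
      and P: "\<And>i. \<forall>\<delta>>0. \<exists>C\<in>loc_sets. measure M1 (sd (A i) C) < \<delta> \<and> measure M2 (sd (A i) C) < \<delta>"
    have As: "A i \<in> sets (Xspace :: 'e config measure)" for i using rA Xs by blast
    show "\<forall>\<delta>>0. \<exists>C\<in>loc_sets. measure M1 (sd (\<Union>i. A i) C) < \<delta> \<and> measure M2 (sd (\<Union>i. A i) C) < \<delta>"
    proof (intro allI impI)
      fix \<delta> :: real assume \<delta>: "0 < \<delta>"
      define U where "U = (\<Union>i. A i)"
      define Part where "Part n = (\<Union>i<n. A i)" for n
      have Us: "U \<in> sets (Xspace :: 'e config measure)" unfolding U_def using As by blast
      have Ps: "Part n \<in> sets (Xspace :: 'e config measure)" for n unfolding Part_def using As by blast
      have inc: "incseq Part" unfolding Part_def incseq_def by (auto intro: order_less_le_trans)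
      have UP: "(\<Union>n. Part n) = U" unfolding Part_def U_def by auto
      have PU: "Part n \<subseteq> U" for n unfolding Part_def U_def by auto
      have l1: "(\<lambda>n. measure M1 (Part n)) \<longlonglongrightarrow> measure M1 U"
        using M1.finite_Lim_measure_incseq[of Part] Ps s inc UP by auto
      have l2: "(\<lambda>n. measure M2 (Part n)) \<longlonglongrightarrow> measure M2 U"
        using M2.finite_Lim_measure_incseq[of Part] Ps s inc UP by auto
      have h2: "0 < \<delta> / 2" using \<delta> by simp
      obtain N1 where N1: "\<And>n. n \<ge> N1 \<Longrightarrow> norm (measure M1 (Part n) - measure M1 U) < \<delta> / 2"
        using LIMSEQ_D[OF l1 h2] by blast
      obtain N2 where N2: "\<And>n. n \<ge> N2 \<Longrightarrow> norm (measure M2 (Part n) - measure M2 U) < \<delta> / 2"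
        using LIMSEQ_D[OF l2 h2] by blast
      define N where "N = max N1 N2"
      have r1: "measure M1 (U - Part N) < \<delta> / 2"
      proof -
        have "measure M1 (U - Part N) = measure M1 U - measure M1 (Part N)"
          by (rule M1.finite_measure_Diff) (use Us Ps PU s in auto)
        moreover have "norm (measure M1 (Part N) - measure M1 U) < \<delta> / 2" using N1 by (simp add: N_def)
        ultimately show ?thesis unfolding real_norm_def by arith
      qed
      have r2: "measure M2 (U - Part N) < \<delta> / 2"
      proof -
        have "measure M2 (U - Part N) = measure M2 U - measure M2 (Part N)"
          by (rule M2.finite_measure_Diff) (use Us Ps PU s in auto)
        moreover have "norm (measure M2 (Part N) - measure M2 U) < \<delta> / 2" using N2 by (simp add: N_def)
        ultimately show ?thesis unfolding real_norm_def by arith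
      qed
      define \<delta>' where "\<delta>' = \<delta> / (2 * (real N + 1))"
      have \<delta>': "0 < \<delta>'" using \<delta> by (simp add: \<delta>'_def)
      have "\<forall>i. \<exists>C. C \<in> loc_sets \<and> measure M1 (sd (A i) C) < \<delta>' \<and> measure M2 (sd (A i) C) < \<delta>'"
        using P \<delta>' by blast
      then obtain C where C: "\<And>i. C i \<in> loc_sets" "\<And>i. measure M1 (sd (A i) (C i)) < \<delta>'"
        "\<And>i. measure M2 (sd (A i) (C i)) < \<delta>'" by metis
      define D where "D = (\<Union>i<N. C i)"
      have D: "D \<in> loc_sets" unfolding D_def using C(1) loc_sets_UN by blast
      have Cs: "C i \<in> sets (Xspace :: 'e config measure)" for i using loc_sets_sets[OF C(1)] .
      have sds: "sd (A i) (C i) \<in> sets (Xspace :: 'e config measure)" for i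
        unfolding sd_def using As Cs by blast
      have sub: "sd U D \<subseteq> (U - Part N) \<union> (\<Union>i<N. sd (A i) (C i))"
        unfolding sd_def U_def D_def Part_def by blast
      have NB: "N * \<delta>' < \<delta> / 2"
      proof -
        have "real N * \<delta>' = \<delta> / 2 * (real N / (real N + 1))" by (simp add: \<delta>'_def field_simps)
        also have "\<dots> < \<delta> / 2 * 1" by (rule mult_strict_left_mono) (use \<delta> in auto)
        finally show ?thesis by simp
      qed
      have bound: "measure M (sd U D) < \<delta>"
        if fmM: "finite_measure M" and sM: "sets M = sets Xspace" and r: "measure M (U - Part N) < \<delta> / 2"
          and c: "\<And>i. measure M (sd (A i) (C i)) < \<delta>'" for M :: "'e config measure"
      proof -
        interpret finite_measure M by fact
        have "measure M (sd U D) \<le> measure M ((U - Part N) \<union> (\<Union>i<N. sd (A i) (C i)))"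
          by (rule finite_measure_mono[OF sub]) (use Us Ps sds sM in auto)
        also have "\<dots> \<le> measure M (U - Part N) + measure M (\<Union>i<N. sd (A i) (C i))"
          by (rule measure_Un_le) (use Us Ps sds sM in auto)
        also have "measure M (\<Union>i<N. sd (A i) (C i)) \<le> (\<Sum>i<N. measure M (sd (A i) (C i)))"
          by (rule finite_measure_subadditive_finite) (use sds sM in auto)
        also have "\<dots> \<le> real (card {..<N}) * \<delta>'"
          by (rule sum_bounded_above) (use c in \<open>auto intro: less_imp_le\<close>)
        also have "\<dots> = N * \<delta>'" by simp
        finally show ?thesis using r NB by linarith
      qed
      show "\<exists>C\<in>loc_sets. measure M1 (sd (\<Union>i. A i) C) < \<delta> \<and> measure M2 (sd (\<Union>i. A i) C) < \<delta>"
        using bound[OF fm(1) s(1) r1 C(2)] bound[OF fm(2) s(2) r2 C(3)] D unfolding U_def by blast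
    qed
  qed
qed




lemma weak_meas:
  fixes \<nu> :: "nat \<Rightarrow> ('e::finite) config measure"
  assumes weak: "weak_star_conv (\<lambda>j. \<nu> (r j)) \<mu>"
    and nsets: "\<And>k. sets (\<nu> k) = sets Xspace" and mu: "sets \<mu> = sets Xspace"
    and A: "A \<in> loc_sets"
  shows "(\<lambda>j. measure (\<nu> (r j)) A) \<longlonglongrightarrow> measure \<mu> A"
proof -
  obtain KA where KA: "loc KA (indicator A :: 'e config \<Rightarrow> real)" using loc_sets_ind[OF A] by blast
  have sp: "space (\<nu> k) = UNIV" for k using sets_eq_imp_space_eq[OF nsets[of k]] by simp
  have spm: "space \<mu> = UNIV" using sets_eq_imp_space_eq[OF mu] by simp
  have "(\<lambda>j. \<integral>x. (indicator A x :: real) \<partial>\<nu> (r j)) \<longlonglongrightarrow> (\<integral>x. indicator A x \<partial>\<mu>)"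
    using weak_loc[OF weak KA] by simp
  then show ?thesis using sp spm by simp
qed

lemma ui_bound:
  fixes \<nu> :: "nat \<Rightarrow> ('e::finite) config measure"
  assumes nsets: "\<And>k. sets (\<nu> k) = sets Xspace" and nprob: "\<And>k. prob_space (\<nu> k)"
    and ac: "\<And>k. absolutely_continuous (\<nu> 0) (\<nu> k)"
    and ui: "unif_integrable (\<nu> 0) (\<lambda>k x. enn2real (RN_deriv (\<nu> 0) (\<nu> k) x))"
    and e: "0 < e"
  shows "\<exists>K\<ge>0. \<forall>k B. B \<in> sets (Xspace :: 'e config measure) \<longrightarrow> measure (\<nu> k) B \<le> K * measure (\<nu> 0) B + e"
proof -
  define f where "f k x = enn2real (RN_deriv (\<nu> 0) (\<nu> k) x)" for k x
  have fi: "integrable (\<nu> 0) (f k)" for k using ui unfolding unif_integrable_def f_def by blast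
  obtain K where K: "\<And>k. (\<integral>x. indicator {x. K < \<bar>f k x\<bar>} x * \<bar>f k x\<bar> \<partial>\<nu> 0) \<le> e"
    using ui e unfolding unif_integrable_def f_def by blast
  define K' where "K' = max K 0"
  interpret N0: prob_space "\<nu> 0" by (rule nprob)
  have sp0: "space (\<nu> 0) = UNIV" using sets_eq_imp_space_eq[OF nsets[of 0]] by simp
  have fm: "f k \<in> borel_measurable (\<nu> 0)" for k using fi by (rule borel_measurable_integrable)
  have Ks: "{x. K < \<bar>f k x\<bar>} \<in> sets (\<nu> 0)" for k
  proof -
    have "{x \<in> space (\<nu> 0). K < \<bar>f k x\<bar>} \<in> sets (\<nu> 0)" using fm[of k] by measurable
    then show ?thesis using sp0 by simp
  qed
  have main: "measure (\<nu> k) B \<le> K' * measure (\<nu> 0) B + e" if B: "B \<in> sets (Xspace :: 'e config measure)" for k B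
  proof -
    interpret Nk: prob_space "\<nu> k" by (rule nprob)
    have B0: "B \<in> sets (\<nu> 0)" using B nsets by simp
    have spk: "space (\<nu> k) = UNIV" using sets_eq_imp_space_eq[OF nsets[of k]] by simp
    have "measure (\<nu> k) B = (\<integral>x. indicator B x \<partial>\<nu> k)" using spk by simp
    also have "\<dots> = (\<integral>x. f k x * indicator B x \<partial>\<nu> 0)"
      unfolding f_def
      by (rule N0.RN_deriv_integral[OF Nk.sigma_finite_measure_axioms ac]) (use nsets B0 borel_measurable_indicator[OF B0] in auto)
    also have "\<dots> \<le> (\<integral>x. K' * indicator B x + indicator {x. K < \<bar>f k x\<bar>} x * \<bar>f k x\<bar> \<partial>\<nu> 0)"
    proof (rule integral_mono)
      show "integrable (\<nu> 0) (\<lambda>x. f k x * indicator B x)"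
        by (rule integrable_real_mult_indicator[OF B0 fi])
      have i1: "integrable (\<nu> 0) (\<lambda>x. K' * indicator B x)"
        using B0 by (intro integrable_mult_right) (simp add: integrable_indicator_iff sp0 less_top[symmetric])
      have i2: "integrable (\<nu> 0) (\<lambda>x. \<bar>f k x\<bar> * indicator {x. K < \<bar>f k x\<bar>} x)"
        by (rule integrable_real_mult_indicator[OF Ks integrable_abs[OF fi]])
      show "integrable (\<nu> 0) (\<lambda>x. K' * indicator B x + indicator {x. K < \<bar>f k x\<bar>} x * \<bar>f k x\<bar>)"
        using Bochner_Integration.integrable_add[OF i1 i2] by (simp add: mult.commute)
      fix x
      have f0: "0 \<le> f k x" by (simp add: f_def)
      show "f k x * indicator B x \<le> K' * indicator B x + indicator {x. K < \<bar>f k x\<bar>} x * \<bar>f k x\<bar>"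
        using f0 by (cases "x \<in> B"; cases "K < \<bar>f k x\<bar>") (auto simp: K'_def indicator_def)
    qed
    also have "\<dots> = K' * measure (\<nu> 0) B + (\<integral>x. indicator {x. K < \<bar>f k x\<bar>} x * \<bar>f k x\<bar> \<partial>\<nu> 0)"
    proof -
      have i1: "integrable (\<nu> 0) (\<lambda>x. K' * indicator B x)"
        using B0 by (intro integrable_mult_right) (simp add: integrable_indicator_iff sp0 less_top[symmetric])
      have i2: "integrable (\<nu> 0) (\<lambda>x. indicator {x. K < \<bar>f k x\<bar>} x * \<bar>f k x\<bar>)"
        using integrable_real_mult_indicator[OF Ks integrable_abs[OF fi]] by (simp add: mult.commute)
      show ?thesis using Bochner_Integration.integral_add[OF i1 i2] sp0 by simp
    qed
    also have "\<dots> \<le> K' * measure (\<nu> 0) B + e" using K[of k] by simp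
    finally show ?thesis .
  qed
  show ?thesis using main by (intro exI[of _ K']) (auto simp: K'_def)
qed

lemma ac_limit:
  fixes \<nu> :: "nat \<Rightarrow> ('e::finite) config measure"
  assumes nsets: "\<And>k. sets (\<nu> k) = sets Xspace" and nprob: "\<And>k. prob_space (\<nu> k)"
    and ac: "\<And>k. absolutely_continuous (\<nu> 0) (\<nu> k)"
    and ui: "unif_integrable (\<nu> 0) (\<lambda>k x. enn2real (RN_deriv (\<nu> 0) (\<nu> k) x))"
    and mu: "sets \<mu> = sets Xspace" "prob_space \<mu>"
    and weak: "weak_star_conv (\<lambda>j. \<nu> (r j)) \<mu>"
  shows "absolutely_continuous (\<nu> 0) \<mu>"
  unfolding absolutely_continuous_def
proof
  interpret N0: prob_space "\<nu> 0" by (rule nprob)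
  interpret M: prob_space \<mu> by (rule mu(2))
  fix N assume "N \<in> null_sets (\<nu> 0)"
  then have Ns: "N \<in> sets (\<nu> 0)" and N0: "measure (\<nu> 0) N = 0"
    by (auto simp: null_sets_def measure_def)
  have NX: "N \<in> sets (Xspace :: 'e config measure)" using Ns nsets by simp
  have le: "measure \<mu> N \<le> 0 + e" if e: "0 < e" for e
  proof -
    have e2: "0 < e / 2" using e by simp
    obtain K where K0: "K \<ge> 0"
      and K: "\<And>k B. B \<in> sets (Xspace :: 'e config measure) \<Longrightarrow> measure (\<nu> k) B \<le> K * measure (\<nu> 0) B + e / 2"
      using ui_bound[OF nsets nprob ac ui e2] by blast
    define \<delta> where "\<delta> = (e / 2) / (K + 1)"
    have \<delta>: "0 < \<delta>" using e K0 by (simp add: \<delta>_def)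
    obtain C where C: "C \<in> loc_sets" "measure \<mu> (sd N C) < \<delta>" "measure (\<nu> 0) (sd N C) < \<delta>"
      using approx_sets[OF M.finite_measure_axioms N0.finite_measure_axioms mu(1) nsets[of 0] NX] \<delta> by blast
    have CX: "C \<in> sets (Xspace :: 'e config measure)" using loc_sets_sets[OF C(1)] .
    have sdX: "sd N C \<in> sets (Xspace :: 'e config measure)" unfolding sd_def using CX NX by blast
    have muC: "measure \<mu> C \<le> K * measure (\<nu> 0) C + e / 2"
    proof (rule LIMSEQ_le_const2[OF weak_meas[where \<nu>=\<nu> and r=r, OF weak nsets mu(1) C(1)]])
      show "\<exists>N. \<forall>n\<ge>N. measure (\<nu> (r n)) C \<le> K * measure (\<nu> 0) C + e / 2" using K[OF CX] by blast
    qed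
    have "measure (\<nu> 0) C \<le> measure (\<nu> 0) (N \<union> sd N C)"
      by (rule N0.finite_measure_mono) (use NX sdX nsets in \<open>auto simp: sd_def\<close>)
    also have "\<dots> \<le> measure (\<nu> 0) N + measure (\<nu> 0) (sd N C)"
      by (rule measure_Un_le) (use NX sdX nsets in auto)
    finally have n0C: "measure (\<nu> 0) C \<le> \<delta>" using N0 C(3) by simp
    have "measure \<mu> N \<le> measure \<mu> (C \<union> sd N C)"
      by (rule M.finite_measure_mono) (use CX sdX mu in \<open>auto simp: sd_def\<close>)
    also have "\<dots> \<le> measure \<mu> C + measure \<mu> (sd N C)"
      by (rule measure_Un_le) (use CX sdX mu in auto)
    also have "\<dots> \<le> K * \<delta> + e / 2 + \<delta>"
      using muC C(2) mult_left_mono[OF n0C K0] by simp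
    also have "\<dots> = (K + 1) * \<delta> + e / 2" by (simp add: algebra_simps)
    also have "(K + 1) * \<delta> = e / 2"
    proof -
      have "K + 1 \<noteq> 0" using K0 by simp
      then show ?thesis unfolding \<delta>_def by (simp add: field_simps)
    qed
    also have "e / 2 + e / 2 = e" by simp
    finally show ?thesis by simp
  qed
  have "measure \<mu> N \<le> 0" by (rule field_le_epsilon) (rule le)
  then have "measure \<mu> N = 0" by (simp add: measure_nonneg antisym)
  moreover have "N \<in> sets \<mu>" using NX mu(1) by simp
  ultimately show "N \<in> null_sets \<mu>" by (simp add: null_sets_def M.emeasure_eq_measure)
qed

theorem theoremD:
  fixes \<Phi> :: "('e::finite) interaction"
    and enum :: "nat \<Rightarrow> int set"
    and \<nu> :: "nat \<Rightarrow> 'e config measure"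
  assumes "is_interaction \<Phi>" and "UAC \<Phi>" and "dobrushin \<Phi>"
    and "bij_betw enum {i. 1 \<le> i} crossing_sets"
    and "\<And>k. gibbs_measure (Psi enum \<Phi> k) (\<nu> k)"
    and "\<And>k. absolutely_continuous (\<nu> 0) (\<nu> k)"
    and "unif_integrable (\<nu> 0) (\<lambda>k x. enn2real (RN_deriv (\<nu> 0) (\<nu> k) x))"
  shows "\<forall>\<mu> r. strict_mono r \<and> sets \<mu> = sets Xspace \<and> prob_space \<mu> \<and>
            weak_star_conv (\<lambda>j. \<nu> (r j)) \<mu> \<longrightarrow>
            gibbs_measure \<Phi> \<mu> \<and> absolutely_continuous (\<nu> 0) \<mu>"
proof (intro allI impI conjI)
  fix \<mu> r
  assume h: "strict_mono r \<and> sets \<mu> = sets Xspace \<and> prob_space \<mu> \<and> weak_star_conv (\<lambda>j. \<nu> (r j)) \<mu>"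
  then have r: "strict_mono r" and mu: "sets \<mu> = sets Xspace" "prob_space \<mu>"
    and weak: "weak_star_conv (\<lambda>j. \<nu> (r j)) \<mu>" by auto
  show "gibbs_measure \<Phi> \<mu>"
    by (rule gibbs_limit[OF assms(1,2,4,5) r mu weak])
  have nsets: "\<And>k. sets (\<nu> k) = sets Xspace" and nprob: "\<And>k. prob_space (\<nu> k)"
    using gibbsD[OF assms(5)] by auto
  show "absolutely_continuous (\<nu> 0) \<mu>"
    by (rule ac_limit[OF nsets nprob assms(6,7) mu weak])
qed


end
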